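(* Let $\Sigma$ be an alphabet and $L\subseteq\Sigma^\omega$. The following are equivalent: (1) there are finitely many Parikh-recognizable languages $U_1,V_1,\dots,U_n,V_n\subseteq\Sigma^*$ with $L=\bigcup_{i=1}^n U_iV_i^\omega$; (2) $L$ is recognized by an SPBA $\mathcal{A}$ such that accepting states appear only in the leaves of the condensation of $\mathcal{A}$, and there is at most one accepting state per leaf.
   Context: An alphabet $\Sigma$ is a finite nonempty set; $\varepsilon$ is the empty word. For $L\subseteq\Sigma^*$, $L^\omega=\{w_1w_2\cdots\mid w_i\in L\setminus\{\varepsilon\}\}$. A semi-linear set in $\mathbb{N}^d$ is a finite union of sets $\{b_0+b_1z_1+\dots+b_\ell z_\ell\mid z_i\in\mathbb{N}\}$ with $b_j\in\mathbb{N}^d$. A Parikh automaton (PA) of dimension $d$ is $\mathcal{A}=(Q,\Sigma,q_0,\Delta,F,C)$ with finite state set $Q$, $q_0\in Q$, $F\subseteq Q$, finite $\Delta\subseteq Q\times\Sigma\times\mathbb{N}^d\times Q$, and semi-linear $C\subseteq\mathbb{N}^d$. A run on $w=x_1\cdots x_n$ is $r_1\cdots r_n$ with $r_i=(p_{i-1},x_i,\mathbf{v}_i,p_i)\in\Delta$, $p_0=q_0$; $\rho(r)=\sum_i\mathbf{v}_i$; it is accepting if $p_n\in F$ and $\rho(r)\in C$. A language is Parikh-recognizable if it is the set of words with an accepting run of some PA. A run on an infinite word $\alpha$ is an infinite sequence $r=r_1r_2\cdots$ with $r_i=(p_{i-1},\alpha_i,\mathbf{v}_i,p_i)\in\Delta$,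 $p_0=q_0$. A (strong reset) Parikh–Büchi automaton (SPBA) is a PA where such a run is accepting if, setting $k_0=0$ and letting $k_1<k_2<\cdots$ be all positions with $p_{k_i}\in F$, this sequence is infinite and $\rho(r_{k_{i-1}+1}\cdots r_{k_i})\in C$ for all $i\ge1$; it recognizes the set of infinite words with an accepting run. The underlying graph of $\mathcal{A}$ has vertex set $Q$ and an edge $(p,q)$ iff some transition goes from $p$ to $q$. A strongly connected component (SCC) is a maximal set of vertices mutually reachable by paths. The condensation is the DAG whose vertices are the SCCs, with an edge $(U,V)$ iff there are $u\in U$, $v\in V$ with an edge $(u,v)$; its leaves are SCCs without outgoing edges in the condensation. *)

theory Defs
  imports Main "HOL-Library.Omega_Words_Fun"
begin

definition vadd :: "nat list \<Rightarrow> nat list \<Rightarrow> nat list" where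
  "vadd u v = map2 (+) u v"

definition vscale :: "nat \<Rightarrow> nat list \<Rightarrow> nat list" where
  "vscale z v = map ((*) z) v"

definition linear_set :: "nat list \<Rightarrow> nat list list \<Rightarrow> nat list set" where
  "linear_set b0 bs =
     {foldr vadd (map2 vscale zs bs) b0 | zs. length zs = length bs}"

definition semilinear :: "nat \<Rightarrow> nat list set \<Rightarrow> bool" where
  "semilinear d C \<longleftrightarrow>
     (\<exists>ps :: (nat list \<times> nat list list) list.
        (\<forall>(b0, bs) \<in> set ps. length b0 = d \<and> (\<forall>b \<in> set bs. length b = d)) \<and>
        C = (\<Union>(b0, bs) \<in> set ps. linear_set b0 bs))"

type_synonym 'a ptrans = "nat \<times> 'a \<times> nat list \<times> nat"

record 'a pa =
  pa_dim    :: nat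
  pa_states :: "nat set"
  pa_init   :: nat
  pa_trans  :: "'a ptrans set"
  pa_final  :: "nat set"
  pa_constr :: "nat list set"

definition tsrc :: "'a ptrans \<Rightarrow> nat" where "tsrc t = fst t"
definition tlbl :: "'a ptrans \<Rightarrow> 'a" where "tlbl t = fst (snd t)"
definition tvec :: "'a ptrans \<Rightarrow> nat list" where "tvec t = fst (snd (snd t))"
definition ttgt :: "'a ptrans \<Rightarrow> nat" where "ttgt t = snd (snd (snd t))"

definition wf_pa :: "'a pa \<Rightarrow> bool" where
  "wf_pa A \<longleftrightarrow>
     finite (pa_states A) \<and> pa_init A \<in> pa_states A \<and>
     pa_final A \<subseteq> pa_states A \<and> finite (pa_trans A) \<and>
     (\<forall>(p, a, v, q) \<in> pa_trans A.
        p \<in> pa_states A \<and> q \<in> pa_states A \<and> length v = pa_dim A) \<and>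
     semilinear (pa_dim A) (pa_constr A)"

definition rho :: "nat \<Rightarrow> 'a ptrans list \<Rightarrow> nat list" where
  "rho d rs = foldr vadd (map tvec rs) (replicate d 0)"

definition is_run :: "'a pa \<Rightarrow> 'a list \<Rightarrow> 'a ptrans list \<Rightarrow> bool" where
  "is_run A w rs \<longleftrightarrow>
     length rs = length w \<and>
     (\<forall>i < length rs. rs ! i \<in> pa_trans A \<and> tlbl (rs ! i) = w ! i \<and>
        tsrc (rs ! i) = (if i = 0 then pa_init A else ttgt (rs ! (i - 1))))"

definition run_last :: "'a pa \<Rightarrow> 'a ptrans list \<Rightarrow> nat" where
  "run_last A rs = (if rs = [] then pa_init A else ttgt (last rs))"

definition pa_lang :: "'a pa \<Rightarrow> 'a list set" where
  "pa_lang A = {w. \<exists>rs. is_run A w rs \<and> run_last A rs \<in> pa_final A \<and>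
                        rho (pa_dim A) rs \<in> pa_constr A}"

definition parikh_recognizable :: "'a list set \<Rightarrow> bool" where
  "parikh_recognizable L \<longleftrightarrow> (\<exists>A :: 'a pa. wf_pa A \<and> pa_lang A = L)"

text \<open>A run r on an infinite word: r i is the (i+1)-st transition r_{i+1} of the paper.\<close>
definition is_orun :: "'a pa \<Rightarrow> 'a word \<Rightarrow> (nat \<Rightarrow> 'a ptrans) \<Rightarrow> bool" where
  "is_orun A \<alpha> r \<longleftrightarrow>
     (\<forall>i. r i \<in> pa_trans A \<and> tlbl (r i) = \<alpha> i \<and>
          tsrc (r i) = (if i = 0 then pa_init A else ttgt (r (i - 1))))"

definition ostate :: "'a pa \<Rightarrow> (nat \<Rightarrow> 'a ptrans) \<Rightarrow> nat \<Rightarrow> nat" where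
  "ostate A r k = (if k = 0 then pa_init A else ttgt (r (k - 1)))"

text \<open>Acceptance: infinitely many positions k \<ge> 1 with p_k in F, and for every two
  consecutive positions k_{i-1} < k_i of the sequence 0 = k_0 < k_1 < ... the
  vector sum of r_{k_{i-1}+1} ... r_{k_i} lies in C.\<close>
definition spba_accepting :: "'a pa \<Rightarrow> (nat \<Rightarrow> 'a ptrans) \<Rightarrow> bool" where
  "spba_accepting A r \<longleftrightarrow>
     (\<exists>\<^sub>\<infinity>k. k \<ge> 1 \<and> ostate A r k \<in> pa_final A) \<and>
     (\<forall>i j. i < j \<and> (i = 0 \<or> ostate A r i \<in> pa_final A) \<and> ostate A r j \<in> pa_final A \<and>
            (\<forall>k. i < k \<and> k < j \<longrightarrow> ostate A r k \<notin> pa_final A) \<longrightarrow>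
            rho (pa_dim A) (map r [i..<j]) \<in> pa_constr A)"

definition spba_lang :: "'a pa \<Rightarrow> 'a word set" where
  "spba_lang A = {\<alpha>. \<exists>r. is_orun A \<alpha> r \<and> spba_accepting A r}"

definition pa_edges :: "'a pa \<Rightarrow> (nat \<times> nat) set" where
  "pa_edges A = {(p, q). \<exists>a v. (p, a, v, q) \<in> pa_trans A}"

definition scc_of :: "'a pa \<Rightarrow> nat \<Rightarrow> nat set" where
  "scc_of A q = {p \<in> pa_states A. (q, p) \<in> (pa_edges A)\<^sup>* \<and> (p, q) \<in> (pa_edges A)\<^sup>*}"

definition sccs :: "'a pa \<Rightarrow> nat set set" where
  "sccs A = scc_of A ` pa_states A"

definition is_leaf_scc :: "'a pa \<Rightarrow> nat set \<Rightarrow> bool" where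
  "is_leaf_scc A S \<longleftrightarrow> S \<in> sccs A \<and>
     \<not> (\<exists>u \<in> S. \<exists>v. (u, v) \<in> pa_edges A \<and> v \<notin> S)"

definition final_only_in_leaves :: "'a pa \<Rightarrow> bool" where
  "final_only_in_leaves A \<longleftrightarrow>
     (\<forall>q \<in> pa_final A. \<exists>S. is_leaf_scc A S \<and> q \<in> S) \<and>
     (\<forall>S. is_leaf_scc A S \<longrightarrow> card (S \<inter> pa_final A) \<le> 1)"

text \<open>L^omega = { w1 w2 ... | wi \<in> L - {\<epsilon>} }.\<close>
definition omega_pow :: "'a list set \<Rightarrow> 'a word set" where
  "omega_pow V = {\<alpha>. \<exists>ws :: nat \<Rightarrow> 'a list.
       (\<forall>i. ws i \<in> V \<and> ws i \<noteq> []) \<and>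
       (\<forall>k. prefix (length (concat (map ws [0..<k]))) \<alpha> = concat (map ws [0..<k]))}"

definition conc_omega :: "'a list set \<Rightarrow> 'a word set \<Rightarrow> 'a word set" where
  "conc_omega U W = {u \<frown> \<beta> | u \<beta>. u \<in> U \<and> \<beta> \<in> W}"

end

theory Submission
  imports Defs
begin


section \<open>Vectors\<close>

lemma length_vadd[simp]: "length (vadd u v) = min (length u) (length v)"
  by (simp add: vadd_def)

lemma vadd_append:
  "length a = length c \<Longrightarrow> vadd (a @ b) (c @ d) = vadd a c @ vadd b d"
  by (simp add: vadd_def)

lemma vadd_zero_left[simp]: "length v = d \<Longrightarrow> vadd (replicate d 0) v = v"
  by (induction v arbitrary: d) (auto simp: vadd_def)

lemma vadd_zero_right[simp]: "length v = d \<Longrightarrow> vadd v (replicate d 0) = v"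
  by (induction v arbitrary: d) (auto simp: vadd_def)

lemma vadd_zero_zero[simp]: "vadd (replicate d 0) (replicate d 0) = replicate d 0"
  by simp

lemma vadd_Cons[simp]: "vadd (a # u) (b # v) = (a + b) # vadd u v"
  by (simp add: vadd_def)

lemma vadd_Nil[simp]: "vadd [] v = []" "vadd u [] = []"
  by (auto simp: vadd_def)

lemma vscale_append[simp]: "vscale z (a @ b) = vscale z a @ vscale z b"
  by (simp add: vscale_def)

lemma vscale_replicate0[simp]: "vscale z (replicate n 0) = replicate n 0"
  by (simp add: vscale_def)

lemma length_vscale[simp]: "length (vscale z v) = length v"
  by (simp add: vscale_def)

lemma rho_Nil[simp]: "rho d [] = replicate d 0"
  by (simp add: rho_def)

lemma rho_Cons[simp]: "rho d (t # ts) = vadd (tvec t) (rho d ts)"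
  by (simp add: rho_def)

lemma length_rho: "(\<forall>t\<in>set ts. length (tvec t) = d) \<Longrightarrow> length (rho d ts) = d"
  by (induction ts) auto

section \<open>Semilinear sets\<close>

lemma length_lin:
  assumes "length b0 = d" "\<forall>b\<in>set bs. length b = d"
  shows "length (foldr vadd (map2 vscale zs bs) b0) = d"
  using assms
proof (induction bs arbitrary: zs)
  case Nil then show ?case by simp
next
  case (Cons b bs)
  then show ?case by (cases zs) auto
qed

lemma semilinear_length: "semilinear d C \<Longrightarrow> x \<in> C \<Longrightarrow> length x = d"
  unfolding semilinear_def linear_set_def using length_lin by fastforce

lemma semilinear_Un: "semilinear d C1 \<Longrightarrow> semilinear d C2 \<Longrightarrow> semilinear d (C1 \<union> C2)"
  unfolding semilinear_def
proof (elim exE conjE)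
  fix ps1 ps2 :: "(nat list \<times> nat list list) list"
  assume a: "\<forall>(b0, bs)\<in>set ps1. length b0 = d \<and> (\<forall>b\<in>set bs. length b = d)"
    "C1 = (\<Union>(b0, bs)\<in>set ps1. linear_set b0 bs)"
    "\<forall>(b0, bs)\<in>set ps2. length b0 = d \<and> (\<forall>b\<in>set bs. length b = d)"
    "C2 = (\<Union>(b0, bs)\<in>set ps2. linear_set b0 bs)"
  show "\<exists>ps. (\<forall>(b0, bs)\<in>set ps. length b0 = d \<and> (\<forall>b\<in>set bs. length b = d)) \<and>
          C1 \<union> C2 = (\<Union>(b0, bs)\<in>set ps. linear_set b0 bs)"
    by (rule exI[of _ "ps1 @ ps2"]) (use a in auto)
qed

lemma semilinear_empty: "semilinear d {}"
  unfolding semilinear_def by (rule exI[of _ "[]"]) auto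

lemma semilinear_single: "semilinear (length v) {v}"
  unfolding semilinear_def linear_set_def
  by (rule exI[of _ "[(v, [])]"]) auto

definition vprod :: "nat list set \<Rightarrow> nat list set \<Rightarrow> nat list set" where
  "vprod C D = {x @ y | x y. x \<in> C \<and> y \<in> D}"

lemma vprod_mem:
  assumes "\<forall>x\<in>C. length x = d" "length p = d"
  shows "p @ q \<in> vprod C D \<longleftrightarrow> p \<in> C \<and> q \<in> D"
  using assms unfolding vprod_def by auto

lemma lin_shift_right:
  assumes "length b0 = d" "length c0 = e" "\<forall>c\<in>set cs. length c = e"
  shows "foldr vadd (map2 vscale zs (map (\<lambda>c. replicate d 0 @ c) cs)) (b0 @ c0)
         = b0 @ foldr vadd (map2 vscale zs cs) c0"
  using assms
proof (induction cs arbitrary: zs)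
  case Nil then show ?case by simp
next
  case (Cons c cs)
  show ?case
  proof (cases zs)
    case Nil then show ?thesis by simp
  next
    case (Cons z zs')
    have l: "length (foldr vadd (map2 vscale zs' cs) c0) = e"
      using Cons.prems by (intro length_lin) auto
    have "foldr vadd (map2 vscale zs (map (\<lambda>c. replicate d 0 @ c) (c # cs))) (b0 @ c0)
      = vadd (replicate d 0 @ vscale z c) (b0 @ foldr vadd (map2 vscale zs' cs) c0)"
      using Cons.IH[of zs'] Cons.prems Cons by simp
    also have "\<dots> = b0 @ vadd (vscale z c) (foldr vadd (map2 vscale zs' cs) c0)"
      using Cons.prems by (subst vadd_append) auto
    finally show ?thesis using Cons by simp
  qed
qed

lemma lin_shift_left:
  assumes "length x = d" "\<forall>b\<in>set bs. length b = d" "length y = e"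
  shows "foldr vadd (map2 vscale zs (map (\<lambda>b. b @ replicate e 0) bs)) (x @ y)
         = foldr vadd (map2 vscale zs bs) x @ y"
  using assms
proof (induction bs arbitrary: zs)
  case Nil then show ?case by simp
next
  case (Cons b bs)
  show ?case
  proof (cases zs)
    case Nil then show ?thesis by simp
  next
    case (Cons z zs')
    have l: "length (foldr vadd (map2 vscale zs' bs) x) = d"
      using Cons.prems by (intro length_lin) auto
    have "foldr vadd (map2 vscale zs (map (\<lambda>b. b @ replicate e 0) (b # bs))) (x @ y)
      = vadd (vscale z b @ replicate e 0) (foldr vadd (map2 vscale zs' bs) x @ y)"
      using Cons.IH[of zs'] Cons.prems Cons by simp
    also have "\<dots> = vadd (vscale z b) (foldr vadd (map2 vscale zs' bs) x) @ vadd (replicate e 0) y"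
      using Cons.prems l by (subst vadd_append) auto
    finally show ?thesis using Cons Cons.prems by simp
  qed
qed

lemma map2_append_eq:
  "length xs = length ys \<Longrightarrow> map2 f (xs @ xs') (ys @ ys') = map2 f xs ys @ map2 f xs' ys'"
  by simp

lemma linear_set_prod:
  assumes "length b0 = d" "\<forall>b\<in>set bs. length b = d"
     "length c0 = e" "\<forall>c\<in>set cs. length c = e"
  shows "vprod (linear_set b0 bs) (linear_set c0 cs) =
    linear_set (b0 @ c0) (map (\<lambda>b. b @ replicate e 0) bs @ map (\<lambda>c. replicate d 0 @ c) cs)"
proof -
  have key: "foldr vadd (map2 vscale (zs1 @ zs2)
      (map (\<lambda>b. b @ replicate e 0) bs @ map (\<lambda>c. replicate d 0 @ c) cs)) (b0 @ c0)
    = foldr vadd (map2 vscale zs1 bs) b0 @ foldr vadd (map2 vscale zs2 cs) c0"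
    if "length zs1 = length bs" for zs1 zs2
  proof -
    have "map2 vscale (zs1 @ zs2) (map (\<lambda>b. b @ replicate e 0) bs @ map (\<lambda>c. replicate d 0 @ c) cs)
      = map2 vscale zs1 (map (\<lambda>b. b @ replicate e 0) bs) @ map2 vscale zs2 (map (\<lambda>c. replicate d 0 @ c) cs)"
      using that by (intro map2_append_eq) simp
    moreover have "length (foldr vadd (map2 vscale zs2 cs) c0) = e"
      using assms by (intro length_lin) auto
    ultimately show ?thesis
      using assms lin_shift_right[of b0 d c0 e cs zs2] lin_shift_left[of b0 d bs "foldr vadd (map2 vscale zs2 cs) c0" e zs1]
      by (simp add: foldr_append)
  qed
  show ?thesis
  proof (intro set_eqI iffI)
    fix v assume "v \<in> vprod (linear_set b0 bs) (linear_set c0 cs)"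
    then obtain zs1 zs2 where "length zs1 = length bs" "length zs2 = length cs"
      "v = foldr vadd (map2 vscale zs1 bs) b0 @ foldr vadd (map2 vscale zs2 cs) c0"
      unfolding vprod_def linear_set_def by blast
    then show "v \<in> linear_set (b0 @ c0) (map (\<lambda>b. b @ replicate e 0) bs @ map (\<lambda>c. replicate d 0 @ c) cs)"
      unfolding linear_set_def using key by (intro CollectI exI[of _ "zs1 @ zs2"]) auto
  next
    fix v assume "v \<in> linear_set (b0 @ c0) (map (\<lambda>b. b @ replicate e 0) bs @ map (\<lambda>c. replicate d 0 @ c) cs)"
    then obtain zs where zs: "length zs = length bs + length cs"
      "v = foldr vadd (map2 vscale zs (map (\<lambda>b. b @ replicate e 0) bs @ map (\<lambda>c. replicate d 0 @ c) cs)) (b0 @ c0)"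
      unfolding linear_set_def by auto
    have "zs = take (length bs) zs @ drop (length bs) zs" by simp
    then have "v = foldr vadd (map2 vscale (take (length bs) zs) bs) b0 @
                   foldr vadd (map2 vscale (drop (length bs) zs) cs) c0"
      using zs key[of "take (length bs) zs" "drop (length bs) zs"] by (metis length_take min.absorb2 le_add1)
    then show "v \<in> vprod (linear_set b0 bs) (linear_set c0 cs)"
      unfolding vprod_def linear_set_def using zs(1) by fastforce
  qed
qed

lemma semilinear_prod:
  assumes "semilinear d C" "semilinear e D"
  shows "semilinear (d + e) (vprod C D)"
proof -
  obtain ps1 where p1: "\<forall>(b0, bs)\<in>set ps1. length b0 = d \<and> (\<forall>b\<in>set bs. length b = d)"
    "C = (\<Union>(b0, bs)\<in>set ps1. linear_set b0 bs)"
    using assms(1) unfolding semilinear_def by blast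
  obtain ps2 where p2: "\<forall>(b0, bs)\<in>set ps2. length b0 = e \<and> (\<forall>b\<in>set bs. length b = e)"
    "D = (\<Union>(b0, bs)\<in>set ps2. linear_set b0 bs)"
    using assms(2) unfolding semilinear_def by blast
  have p1': "length b0 = d \<and> (\<forall>b\<in>set bs. length b = d)" if "(b0, bs) \<in> set ps1" for b0 bs
    using bspec[OF p1(1) that] by simp
  have p2': "length b0 = e \<and> (\<forall>b\<in>set bs. length b = e)" if "(b0, bs) \<in> set ps2" for b0 bs
    using bspec[OF p2(1) that] by simp
  define f where "f = (\<lambda>((b0::nat list, bs), (c0, cs)).
      (b0 @ c0, map (\<lambda>b. b @ replicate e 0) bs @ map (\<lambda>c. replicate d 0 @ (c::nat list)) cs))"
  define ps where "ps = map f (List.product ps1 ps2)"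
  have "vprod C D = (\<Union>PQ\<in>set ps1 \<times> set ps2. vprod (case_prod linear_set (fst PQ)) (case_prod linear_set (snd PQ)))"
    unfolding p1 p2 vprod_def by (auto; blast)
  also have "\<dots> = (\<Union>PQ\<in>set ps1 \<times> set ps2. case_prod linear_set (f PQ))"
  proof (rule SUP_cong[OF refl])
    fix PQ assume "PQ \<in> set ps1 \<times> set ps2"
    then obtain b0 bs c0 cs where "PQ = ((b0, bs), (c0, cs))" "(b0, bs) \<in> set ps1" "(c0, cs) \<in> set ps2"
      by (metis mem_Sigma_iff prod.collapse)
    moreover have "length b0 = d \<and> (\<forall>b\<in>set bs. length b = d)"
      using bspec[OF p1(1) \<open>(b0, bs) \<in> set ps1\<close>] by simp
    moreover have "length c0 = e \<and> (\<forall>b\<in>set cs. length b = e)"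
      using bspec[OF p2(1) \<open>(c0, cs) \<in> set ps2\<close>] by simp
    ultimately show "vprod (case_prod linear_set (fst PQ)) (case_prod linear_set (snd PQ)) = case_prod linear_set (f PQ)"
      using linear_set_prod[of b0 d bs c0 e cs] unfolding f_def by simp
  qed
  also have "\<dots> = (\<Union>(b0, bs)\<in>set ps. linear_set b0 bs)"
    unfolding ps_def set_map set_product image_image by simp
  finally have eq: "vprod C D = (\<Union>(b0, bs)\<in>set ps. linear_set b0 bs)" .
  have "\<forall>(b0, bs)\<in>set ps. length b0 = d + e \<and> (\<forall>b\<in>set bs. length b = d + e)"
    unfolding ps_def f_def apply auto using p1' p2' by (metis add.commute add_left_cancel)+
  then show ?thesis unfolding semilinear_def using eq by blast
qed

lemma semilinear_pos1: "semilinear 2 {[k, 0] | k. k \<ge> 1}"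
proof -
  have "linear_set [1, 0] [[1, 0]] = {[k, 0] | k. k \<ge> 1}"
  proof (intro set_eqI iffI)
    fix x assume "x \<in> linear_set [1, 0] [[1, 0]]"
    then obtain z where "x = foldr vadd (map2 vscale [z] [[1, 0]]) [1, 0]"
      unfolding linear_set_def by (auto simp: length_Suc_conv)
    then show "x \<in> {[k, 0] | k. k \<ge> 1}" by (simp add: vscale_def)
  next
    fix x assume "x \<in> {[k, 0] | k. (k::nat) \<ge> 1}"
    then obtain k where "x = [k, 0]" "k \<ge> 1" by auto
    then show "x \<in> linear_set [1, 0] [[1, 0]]" unfolding linear_set_def
      by (intro CollectI exI[of _ "[k - 1]"]) (simp add: vscale_def)
  qed
  then show ?thesis unfolding semilinear_def
    by (intro exI[of _ "[([1, 0], [[1, 0]])]"]) auto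
qed

lemma semilinear_pos2: "semilinear 2 {[0, k] | k. k \<ge> 1}"
proof -
  have "linear_set [0, 1] [[0, 1]] = {[0, k] | k. k \<ge> 1}"
  proof (intro set_eqI iffI)
    fix x assume "x \<in> linear_set [0, 1] [[0, 1]]"
    then obtain z where "x = foldr vadd (map2 vscale [z] [[0, 1]]) [0, 1]"
      unfolding linear_set_def by (auto simp: length_Suc_conv)
    then show "x \<in> {[0, k] | k. k \<ge> 1}" by (simp add: vscale_def)
  next
    fix x assume "x \<in> {[0, k] | k. (k::nat) \<ge> 1}"
    then obtain k where "x = [0, k]" "k \<ge> 1" by auto
    then show "x \<in> linear_set [0, 1] [[0, 1]]" unfolding linear_set_def
      by (intro CollectI exI[of _ "[k - 1]"]) (simp add: vscale_def)
  qed
  then show ?thesis unfolding semilinear_def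
    by (intro exI[of _ "[([0, 1], [[0, 1]])]"]) auto
qed



section \<open>Finite paths\<close>

fun chain :: "nat \<Rightarrow> 'a ptrans list \<Rightarrow> nat \<Rightarrow> bool" where
  "chain p [] q \<longleftrightarrow> p = q"
| "chain p (t # ts) q \<longleftrightarrow> tsrc t = p \<and> chain (ttgt t) ts q"

definition path :: "'a pa \<Rightarrow> nat \<Rightarrow> 'a ptrans list \<Rightarrow> nat \<Rightarrow> bool" where
  "path A p rs q \<longleftrightarrow> set rs \<subseteq> pa_trans A \<and> chain p rs q"

lemma chain_append: "chain p (xs @ ys) q \<longleftrightarrow> (\<exists>m. chain p xs m \<and> chain m ys q)"
  by (induction xs arbitrary: p) auto

lemma chain_last: "chain p rs q \<Longrightarrow> q = (if rs = [] then p else ttgt (last rs))"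
  by (induction rs arbitrary: p) auto

lemma chain_nth: "chain p rs q \<Longrightarrow> i < length rs \<Longrightarrow>
    tsrc (rs ! i) = (if i = 0 then p else ttgt (rs ! (i - 1)))"
proof (induction rs arbitrary: p i)
  case Nil then show ?case by simp
next
  case (Cons t ts)
  show ?case
  proof (cases i)
    case 0 then show ?thesis using Cons by simp
  next
    case (Suc i')
    then show ?thesis using Cons.IH[of "ttgt t" i'] Cons.prems
      by (cases i') auto
  qed
qed

lemma chain_intro:
  assumes "\<forall>i<length rs. tsrc (rs ! i) = (if i = 0 then p else ttgt (rs ! (i - 1)))"
  shows "chain p rs (if rs = [] then p else ttgt (last rs))"
  using assms
proof (induction rs arbitrary: p)
  case Nil then show ?case by simp
next
  case (Cons t ts)
  have "tsrc t = p" using Cons.prems by force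
  moreover have "chain (ttgt t) ts (if ts = [] then ttgt t else ttgt (last ts))"
  proof (rule Cons.IH, intro allI impI)
    fix i assume "i < length ts"
    then show "tsrc (ts ! i) = (if i = 0 then ttgt t else ttgt (ts ! (i - 1)))"
      using Cons.prems[rule_format, of "Suc i"] by (cases i) auto
  qed
  ultimately show ?case by auto
qed

lemma is_run_iff: "is_run A w rs \<longleftrightarrow> path A (pa_init A) rs (run_last A rs) \<and> map tlbl rs = w"
proof
  assume r: "is_run A w rs"
  then have "chain (pa_init A) rs (run_last A rs)"
    unfolding is_run_def run_last_def using chain_intro[of rs "pa_init A"] by auto
  moreover have "set rs \<subseteq> pa_trans A" using r unfolding is_run_def by (metis in_set_conv_nth subsetI)
  moreover have "map tlbl rs = w" using r unfolding is_run_def by (auto intro: nth_equalityI)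
  ultimately show "path A (pa_init A) rs (run_last A rs) \<and> map tlbl rs = w"
    unfolding path_def by auto
next
  assume "path A (pa_init A) rs (run_last A rs) \<and> map tlbl rs = w"
  then show "is_run A w rs"
    unfolding is_run_def path_def using chain_nth[of "pa_init A" rs] by auto
qed

lemma pa_lang_path: "pa_lang A = {map tlbl rs | rs q. path A (pa_init A) rs q \<and>
    q \<in> pa_final A \<and> rho (pa_dim A) rs \<in> pa_constr A}"
proof -
  have "path A (pa_init A) rs q \<Longrightarrow> q = run_last A rs" for rs q
    unfolding path_def run_last_def using chain_last by metis
  then show ?thesis unfolding pa_lang_def is_run_iff by blast
qed

definition Seg :: "'a pa \<Rightarrow> nat \<Rightarrow> nat \<Rightarrow> 'a list set" where
  "Seg A p q = {map tlbl rs | rs. rs \<noteq> [] \<and> path A p rs q \<and>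
     (\<forall>t\<in>set (butlast rs). ttgt t \<notin> pa_final A) \<and> rho (pa_dim A) rs \<in> pa_constr A}"

section \<open>Flattening\<close>

fun st :: "(nat \<Rightarrow> 'a list) \<Rightarrow> nat \<Rightarrow> nat" where
  "st ws 0 = 0"
| "st ws (Suc n) = st ws n + length (ws n)"

definition is_flat :: "(nat \<Rightarrow> 'a list) \<Rightarrow> 'a word \<Rightarrow> bool" where
  "is_flat ws \<alpha> \<longleftrightarrow> (\<forall>k. prefix (length (concat (map ws [0..<k]))) \<alpha> = concat (map ws [0..<k]))"

lemma omega_pow_flat: "omega_pow V = {\<alpha>. \<exists>ws. (\<forall>i. ws i \<in> V \<and> ws i \<noteq> []) \<and> is_flat ws \<alpha>}"
  unfolding omega_pow_def is_flat_def by simp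

lemma length_concat_st: "length (concat (map ws [0..<k])) = st ws k"
  by (induction k) auto

lemma st_mono: "n \<le> m \<Longrightarrow> st ws n \<le> st ws m"
  by (induction m) (auto simp: le_Suc_eq)

lemma st_less: "(\<forall>n. ws n \<noteq> []) \<Longrightarrow> n < m \<Longrightarrow> st ws n < st ws m"
proof (induction m)
  case 0 then show ?case by simp
next
  case (Suc m)
  then have "length (ws m) > 0" by auto
  then show ?case using Suc by (auto simp: less_Suc_eq)
qed

lemma st_ge: "(\<forall>n. ws n \<noteq> []) \<Longrightarrow> st ws n \<ge> n"
proof (induction n)
  case (Suc n)
  have "ws n \<noteq> []" using Suc.prems by blast
  then have l: "length (ws n) > 0" by simp
  have "st ws (Suc n) = st ws n + length (ws n)" by simp
  then show ?case using Suc.IH[OF Suc.prems] l by linarith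
qed simp

lemma st_decomp: "(\<forall>n. ws n \<noteq> []) \<Longrightarrow> \<exists>n j. i = st ws n + j \<and> j < length (ws n)"
proof (induction i)
  case 0
  then show ?case by (intro exI[of _ 0]) auto
next
  case (Suc i)
  then obtain n j where nj: "i = st ws n + j" "j < length (ws n)" by blast
  show ?case
  proof (cases "Suc j < length (ws n)")
    case True then show ?thesis using nj by (intro exI[of _ n] exI[of _ "Suc j"]) auto
  next
    case False
    then have "Suc i = st ws (Suc n) + 0" using nj by simp
    then show ?thesis using Suc.prems by (intro exI[of _ "Suc n"] exI[of _ 0]) auto
  qed
qed

lemma st_unique:
  assumes "st ws n + j = st ws n' + j'" "j < length (ws n)" "j' < length (ws n')"
  shows "n = n' \<and> j = j'"
proof -
  have "\<not> n < n'" if "st ws n + j = st ws n' + j'" "j < length (ws n)" for n n' j j'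
  proof
    assume "n < n'"
    then have "st ws (Suc n) \<le> st ws n'" by (intro st_mono) simp
    then show False using that by simp
  qed
  then have "n = n'" using assms by (metis linorder_neqE_nat)
  then show ?thesis using assms by simp
qed

lemma flat_iff: "is_flat ws \<alpha> \<longleftrightarrow> (\<forall>n j. j < length (ws n) \<longrightarrow> \<alpha> (st ws n + j) = ws n ! j)"
proof
  assume f: "is_flat ws \<alpha>"
  show "\<forall>n j. j < length (ws n) \<longrightarrow> \<alpha> (st ws n + j) = ws n ! j"
  proof (intro allI impI)
    fix n j assume j: "j < length (ws n)"
    have "prefix (st ws (Suc n)) \<alpha> = concat (map ws [0..<n]) @ ws n"
      using f[unfolded is_flat_def, rule_format, of "Suc n"] by (simp add: length_concat_st)
    then have "prefix (st ws (Suc n)) \<alpha> ! (st ws n + j) = ws n ! j"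
      by (simp add: nth_append length_concat_st)
    moreover have "prefix (st ws (Suc n)) \<alpha> ! (st ws n + j) = \<alpha> (st ws n + j)"
      using j by (simp add: subsequence_def)
    ultimately show "\<alpha> (st ws n + j) = ws n ! j" by simp
  qed
next
  assume h: "\<forall>n j. j < length (ws n) \<longrightarrow> \<alpha> (st ws n + j) = ws n ! j"
  have "prefix (st ws k) \<alpha> = concat (map ws [0..<k])" for k
  proof (induction k)
    case 0 then show ?case by (simp add: subsequence_def)
  next
    case (Suc k)
    have "prefix (st ws (Suc k)) \<alpha> = prefix (st ws k) \<alpha> @ \<alpha> [st ws k \<rightarrow> st ws k + length (ws k)]"
      by (simp add: subsequence_append)
    also have "\<alpha> [st ws k \<rightarrow> st ws k + length (ws k)] = ws k"
      using h by (intro nth_equalityI) auto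
    finally show ?case using Suc by simp
  qed
  then show "is_flat ws \<alpha>" unfolding is_flat_def length_concat_st by simp
qed

lemma st_shift: "st ws (Suc n) = length (ws 0) + st (\<lambda>n. ws (Suc n)) n"
  by (induction n) auto

lemma flat_shift: "is_flat ws \<alpha> \<longleftrightarrow> (\<exists>\<beta>. \<alpha> = ws 0 \<frown> \<beta> \<and> is_flat (\<lambda>n. ws (Suc n)) \<beta>)"
proof
  assume f: "is_flat ws \<alpha>"
  have h: "\<alpha> (st ws n + j) = ws n ! j" if "j < length (ws n)" for n j
    using f that unfolding flat_iff by blast
  have "prefix (length (ws 0)) \<alpha> = ws 0"
    using h[of _ 0] by (intro nth_equalityI) auto
  then have "\<alpha> = ws 0 \<frown> suffix (length (ws 0)) \<alpha>" by (metis prefix_suffix)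
  moreover have "is_flat (\<lambda>n. ws (Suc n)) (suffix (length (ws 0)) \<alpha>)"
    unfolding flat_iff
  proof (intro allI impI)
    fix n j assume "j < length (ws (Suc n))"
    then have "\<alpha> (st ws (Suc n) + j) = ws (Suc n) ! j" by (rule h)
    then show "suffix (length (ws 0)) \<alpha> (st (\<lambda>n. ws (Suc n)) n + j) = ws (Suc n) ! j"
      unfolding st_shift by (simp add: add.assoc)
  qed
  ultimately show "\<exists>\<beta>. \<alpha> = ws 0 \<frown> \<beta> \<and> is_flat (\<lambda>n. ws (Suc n)) \<beta>" by blast
next
  assume "\<exists>\<beta>. \<alpha> = ws 0 \<frown> \<beta> \<and> is_flat (\<lambda>n. ws (Suc n)) \<beta>"
  then obtain \<beta> where b: "\<alpha> = ws 0 \<frown> \<beta>" "is_flat (\<lambda>n. ws (Suc n)) \<beta>" by blast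
  have h: "\<beta> (st (\<lambda>n. ws (Suc n)) n + j) = ws (Suc n) ! j" if "j < length (ws (Suc n))" for n j
    using b(2) that unfolding flat_iff by blast
  show "is_flat ws \<alpha>" unfolding flat_iff
  proof (intro allI impI)
    fix n j assume j: "j < length (ws n)"
    show "\<alpha> (st ws n + j) = ws n ! j"
    proof (cases n)
      case 0 then show ?thesis using j b(1) by simp
    next
      case (Suc m)
      then show ?thesis using j b(1) h[of j m]
        by (simp only: st_shift) (simp add: add.assoc)
    qed
  qed
qed

lemma conc_omega_mem: "\<alpha> \<in> conc_omega X W \<longleftrightarrow> (\<exists>u \<beta>. \<alpha> = u \<frown> \<beta> \<and> u \<in> X \<and> \<beta> \<in> W)"
  unfolding conc_omega_def by blast

lemma omega_pow_mem: "\<beta> \<in> omega_pow Y \<longleftrightarrow> (\<exists>vs. (\<forall>i. vs i \<in> Y \<and> vs i \<noteq> []) \<and> is_flat vs \<beta>)"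
  unfolding omega_pow_flat by blast

lemma conc_omega_flat:
  "\<alpha> \<in> conc_omega X (omega_pow Y) \<longleftrightarrow> (\<exists>ws. ws 0 \<in> X \<and> (\<forall>n. ws (Suc n) \<in> Y \<and> ws (Suc n) \<noteq> []) \<and> is_flat ws \<alpha>)"
proof
  assume "\<alpha> \<in> conc_omega X (omega_pow Y)"
  then obtain u \<beta> where a: "\<alpha> = u \<frown> \<beta>" "u \<in> X" "\<beta> \<in> omega_pow Y"
    unfolding conc_omega_mem by blast
  then obtain vs where b: "\<forall>i. vs i \<in> Y \<and> vs i \<noteq> []" "is_flat vs \<beta>"
    unfolding omega_pow_mem by blast
  have "is_flat (case_nat u vs) \<alpha>" using a b by (subst flat_shift) simp
  then show "\<exists>ws. ws 0 \<in> X \<and> (\<forall>n. ws (Suc n) \<in> Y \<and> ws (Suc n) \<noteq> []) \<and> is_flat ws \<alpha>"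
    using a b by (intro exI[of _ "case_nat u vs"]) auto
next
  assume "\<exists>ws. ws 0 \<in> X \<and> (\<forall>n. ws (Suc n) \<in> Y \<and> ws (Suc n) \<noteq> []) \<and> is_flat ws \<alpha>"
  then obtain ws where a: "ws 0 \<in> X" "\<forall>n. ws (Suc n) \<in> Y \<and> ws (Suc n) \<noteq> []" "is_flat ws \<alpha>" by blast
  then obtain \<beta> where b: "\<alpha> = ws 0 \<frown> \<beta>" "is_flat (\<lambda>n. ws (Suc n)) \<beta>" using flat_shift[of ws \<alpha>] by blast
  have "\<beta> \<in> omega_pow Y" unfolding omega_pow_mem using a(2) b(2) by (intro exI[of _ "\<lambda>n. ws (Suc n)"]) blast
  then show "\<alpha> \<in> conc_omega X (omega_pow Y)"
    unfolding conc_omega_mem using a(1) b(1) by blast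
qed

lemma conc_omega_flat2:
  "\<alpha> \<in> conc_omega X (omega_pow Y) \<longleftrightarrow> (\<exists>ws u v. ws 0 = u @ v \<and> u \<in> X \<and> v \<in> Y \<and> v \<noteq> [] \<and>
       (\<forall>n. ws (Suc n) \<in> Y \<and> ws (Suc n) \<noteq> []) \<and> is_flat ws \<alpha>)"
proof
  assume "\<alpha> \<in> conc_omega X (omega_pow Y)"
  then obtain u \<beta> where a: "\<alpha> = u \<frown> \<beta>" "u \<in> X" "\<beta> \<in> omega_pow Y"
    unfolding conc_omega_mem by blast
  then obtain vs where b: "\<forall>i. vs i \<in> Y \<and> vs i \<noteq> []" "is_flat vs \<beta>"
    unfolding omega_pow_mem by blast
  obtain \<beta>' where c: "\<beta> = vs 0 \<frown> \<beta>'" "is_flat (\<lambda>n. vs (Suc n)) \<beta>'"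
    using b(2) flat_shift[of vs \<beta>] by blast
  have "is_flat (case_nat (u @ vs 0) (\<lambda>n. vs (Suc n))) \<alpha>" using a c by (subst flat_shift) simp
  then show "\<exists>ws u v. ws 0 = u @ v \<and> u \<in> X \<and> v \<in> Y \<and> v \<noteq> [] \<and>
       (\<forall>n. ws (Suc n) \<in> Y \<and> ws (Suc n) \<noteq> []) \<and> is_flat ws \<alpha>"
    using a b by (intro exI[of _ "case_nat (u @ vs 0) (\<lambda>n. vs (Suc n))"] exI[of _ u] exI[of _ "vs 0"]) auto
next
  assume "\<exists>ws u v. ws 0 = u @ v \<and> u \<in> X \<and> v \<in> Y \<and> v \<noteq> [] \<and>
       (\<forall>n. ws (Suc n) \<in> Y \<and> ws (Suc n) \<noteq> []) \<and> is_flat ws \<alpha>"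
  then obtain ws u v where a: "ws 0 = u @ v" "u \<in> X" "v \<in> Y" "v \<noteq> []"
    "\<forall>n. ws (Suc n) \<in> Y \<and> ws (Suc n) \<noteq> []" "is_flat ws \<alpha>" by blast
  then obtain \<beta> where b: "\<alpha> = (u @ v) \<frown> \<beta>" "is_flat (\<lambda>n. ws (Suc n)) \<beta>"
    using flat_shift[of ws \<alpha>] by auto
  have "is_flat (case_nat v (\<lambda>n. ws (Suc n))) (v \<frown> \<beta>)" using b by (subst flat_shift) simp
  moreover have "\<forall>i. case_nat v (\<lambda>n. ws (Suc n)) i \<in> Y \<and> case_nat v (\<lambda>n. ws (Suc n)) i \<noteq> []"
    using a by (auto split: nat.splits)
  ultimately have "v \<frown> \<beta> \<in> omega_pow Y" unfolding omega_pow_mem by blast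
  moreover have "\<alpha> = u \<frown> (v \<frown> \<beta>)" using b by simp
  ultimately show "\<alpha> \<in> conc_omega X (omega_pow Y)"
    unfolding conc_omega_mem using a by blast
qed



lemma orun_path:
  assumes "is_orun A \<alpha> r" "a \<le> b"
  shows "path A (ostate A r a) (map r [a..<b]) (ostate A r b) \<and> map tlbl (map r [a..<b]) = map \<alpha> [a..<b]"
  using assms(2)
proof (induction b)
  case 0 then show ?case by (simp add: path_def)
next
  case (Suc b)
  show ?case
  proof (cases "a = Suc b")
    case True then show ?thesis by (simp add: path_def)
  next
    case False
    then have ab: "a \<le> b" using Suc.prems by simp
    have t: "r b \<in> pa_trans A" "tlbl (r b) = \<alpha> b" "tsrc (r b) = ostate A r b"
      using assms(1) unfolding is_orun_def ostate_def by auto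
    have "chain (ostate A r b) [r b] (ostate A r (Suc b))" using t by (simp add: ostate_def)
    then show ?thesis using Suc.IH[OF ab] ab t
      by (auto simp: path_def chain_append)
  qed
qed

lemma butlast_upt: "butlast [a..<b] = [a..<b - 1]"
  by (induction b) (auto simp: upt_Suc)

lemma L1_fwd:
  assumes run: "is_orun A \<alpha> r" and acc: "spba_accepting A r"
  shows "\<exists>fs ws. fs 0 = pa_init A \<and> (\<forall>n. fs (Suc n) \<in> pa_final A) \<and>
           (\<forall>n. ws n \<in> Seg A (fs n) (fs (Suc n))) \<and> is_flat ws \<alpha>"
proof -
  define S where "S = {k. k \<ge> 1 \<and> ostate A r k \<in> pa_final A}"
  have inf: "infinite S" using acc unfolding spba_accepting_def S_def INFM_iff_infinite by simp
  define K where "K = case_nat 0 (enumerate S)"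
  have K0: "K 0 = 0" by (simp add: K_def)
  have KS: "K (Suc n) \<in> S" for n using enumerate_in_set[OF inf] by (simp add: K_def)
  have Kstep: "K n < K (Suc n)" for n
  proof (cases n)
    case 0 then show ?thesis using KS[of 0] by (simp add: K_def S_def)
  next
    case (Suc m) then show ?thesis using enumerate_step[OF inf] by (simp add: K_def)
  qed
  have Kgap: "k \<notin> S" if "K n < k" "k < K (Suc n)" for n k
  proof
    assume kS: "k \<in> S"
    show False
    proof (cases n)
      case 0
      then have "k < (LEAST n. n \<in> S)" using that by (simp add: K_def enumerate_0)
      then show False using Least_le[of "\<lambda>n. n \<in> S" k] kS by simp
    next
      case (Suc m)
      obtain i where i: "enumerate S i = k" using enumerate_Ex[OF inf kS] by blast
      have "enumerate S m < enumerate S i" "enumerate S i < enumerate S (Suc m)"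
        using that Suc i by (auto simp: K_def)
      then show False using inf by simp
    qed
  qed
  define fs where "fs n = ostate A r (K n)" for n
  define ws where "ws n = map \<alpha> [K n..<K (Suc n)]" for n
  have "fs 0 = pa_init A" by (simp add: fs_def K0 ostate_def)
  moreover have "\<forall>n. fs (Suc n) \<in> pa_final A" using KS by (simp add: fs_def S_def)
  moreover have "ws n \<in> Seg A (fs n) (fs (Suc n))" for n
  proof -
    define rs where "rs = map r [K n..<K (Suc n)]"
    have "rs \<noteq> []" using Kstep[of n] by (simp add: rs_def)
    moreover have "path A (fs n) rs (fs (Suc n))" "map tlbl rs = ws n"
      using orun_path[OF run, of "K n" "K (Suc n)"] Kstep[of n] by (auto simp: rs_def fs_def ws_def)
    moreover have "\<forall>t\<in>set (butlast rs). ttgt t \<notin> pa_final A"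
    proof
      fix t assume "t \<in> set (butlast rs)"
      then obtain k where k: "t = r k" "K n \<le> k" "k < K (Suc n) - 1"
        by (auto simp: rs_def map_butlast[symmetric] butlast_upt)
      then have "ttgt t = ostate A r (Suc k)" by (simp add: ostate_def)
      moreover have "Suc k \<notin> S" using k by (intro Kgap[of n]) auto
      ultimately show "ttgt t \<notin> pa_final A" by (simp add: S_def)
    qed
    moreover have "rho (pa_dim A) rs \<in> pa_constr A"
    proof -
      have "K n = 0 \<or> ostate A r (K n) \<in> pa_final A"
        using KS by (cases n) (auto simp: K0 S_def)
      moreover have "ostate A r (K (Suc n)) \<in> pa_final A" using KS[of n] by (simp add: S_def)
      moreover have "\<forall>k. K n < k \<and> k < K (Suc n) \<longrightarrow> ostate A r k \<notin> pa_final A"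
        using Kgap[of n] by (auto simp: S_def)
      ultimately show ?thesis using acc Kstep[of n] unfolding spba_accepting_def rs_def by blast
    qed
    ultimately show ?thesis unfolding Seg_def by (intro CollectI exI[of _ rs]) simp
  qed
  moreover have "is_flat ws \<alpha>"
  proof -
    have "st ws n = K n" for n
    proof (induction n)
      case 0 then show ?case by (simp add: K0)
    next
      case (Suc n) then show ?case using Kstep[of n] by (simp add: ws_def)
    qed
    then show ?thesis unfolding flat_iff by (simp add: ws_def)
  qed
  ultimately show ?thesis by blast
qed

lemma L1_bwd:
  assumes f0: "fs 0 = pa_init A" and fS: "\<forall>n. fs (Suc n) \<in> pa_final A"
    and seg: "\<forall>n. ws n \<in> Seg A (fs n) (fs (Suc n))" and flat: "is_flat ws \<alpha>"
  shows "\<alpha> \<in> spba_lang A"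
proof -
  define P where "P n rs \<longleftrightarrow> rs \<noteq> [] \<and> path A (fs n) rs (fs (Suc n)) \<and>
     (\<forall>t\<in>set (butlast rs). ttgt t \<notin> pa_final A) \<and> rho (pa_dim A) rs \<in> pa_constr A \<and> map tlbl rs = ws n"
    for n rs
  have ex: "\<exists>rs. P n rs" for n
  proof -
    have "ws n \<in> Seg A (fs n) (fs (Suc n))" using seg by blast
    then obtain rs where "ws n = map tlbl rs" "rs \<noteq> []" "path A (fs n) rs (fs (Suc n))"
      "\<forall>t\<in>set (butlast rs). ttgt t \<notin> pa_final A" "rho (pa_dim A) rs \<in> pa_constr A"
      unfolding Seg_def by blast
    then show ?thesis unfolding P_def by (intro exI[of _ rs]) simp
  qed
  define rs where "rs n = (SOME rs. P n rs)" for n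
  have "P n (rs n)" for n unfolding rs_def using someI_ex[OF ex] .
  then have rs: "\<forall>n. rs n \<noteq> [] \<and> path A (fs n) (rs n) (fs (Suc n)) \<and>
     (\<forall>t\<in>set (butlast (rs n)). ttgt t \<notin> pa_final A) \<and> rho (pa_dim A) (rs n) \<in> pa_constr A \<and>
      map tlbl (rs n) = ws n" unfolding P_def by blast
  have ne: "\<forall>n. ws n \<noteq> []"
  proof
    fix n show "ws n \<noteq> []" using rs[rule_format, of n] by auto
  qed
  have len: "length (rs n) = length (ws n)" for n
  proof -
    have "map tlbl (rs n) = ws n" using rs by blast
    then show ?thesis by (metis length_map)
  qed
  have exNJ: "\<exists>p. i = st ws (fst p) + snd p \<and> snd p < length (ws (fst p))" for i
  proof -
    obtain n j where "i = st ws n + j \<and> j < length (ws n)" using st_decomp[OF ne] by blast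
    then show ?thesis by (intro exI[of _ "(n, j)"]) simp
  qed
  define NJ where "NJ i = (SOME p. i = st ws (fst p) + snd p \<and> snd p < length (ws (fst p)))" for i
  have NJ: "\<forall>i. i = st ws (fst (NJ i)) + snd (NJ i) \<and> snd (NJ i) < length (ws (fst (NJ i)))"
    unfolding NJ_def using someI_ex[OF exNJ] by blast
  define r where "r i = rs (fst (NJ i)) ! snd (NJ i)" for i
  have rat: "r (st ws n + j) = rs n ! j" if "j < length (ws n)" for n j
  proof -
    have "st ws n + j = st ws (fst (NJ (st ws n + j))) + snd (NJ (st ws n + j))"
         "snd (NJ (st ws n + j)) < length (ws (fst (NJ (st ws n + j))))"
      using NJ by blast+
    then have "fst (NJ (st ws n + j)) = n \<and> snd (NJ (st ws n + j)) = j"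
      using st_unique that by metis
    then show ?thesis by (simp add: r_def)
  qed
  have ost0: "ostate A r (st ws n) = fs n" for n
  proof (cases n)
    case 0 then show ?thesis by (simp add: ostate_def f0)
  next
    case (Suc m)
    have lm: "length (ws m) > 0" using ne by simp
    have "st ws n = st ws m + length (ws m)" using Suc by simp
    then have "st ws n - 1 = st ws m + (length (ws m) - 1)" using lm by linarith
    moreover have "st ws n \<noteq> 0" using Suc lm by simp
    ultimately have "ostate A r (st ws n) = ttgt (rs m ! (length (ws m) - 1))"
      using rat[of "length (ws m) - 1" m] lm by (simp add: ostate_def)
    also have "\<dots> = ttgt (last (rs m))" using len[of m] rs by (simp add: last_conv_nth)
    also have "\<dots> = fs n" using rs chain_last[of "fs m" "rs m" "fs (Suc m)"] Suc
      by (auto simp: path_def)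
    finally show ?thesis .
  qed
  have ost: "ostate A r (st ws n + j) = (if j = 0 then fs n else ttgt (rs n ! (j - 1)))"
    if "j < length (ws n)" for n j
  proof (cases j)
    case 0 then show ?thesis using ost0 by simp
  next
    case (Suc j')
    then show ?thesis using rat[of j' n] that by (simp add: ostate_def)
  qed
  have run: "is_orun A \<alpha> r"
    unfolding is_orun_def
  proof
    fix i
    obtain n j where i: "i = st ws n + j" "j < length (ws n)" using NJ by blast
    have ri: "r i = rs n ! j" using rat i by simp
    have "rs n ! j \<in> set (rs n)" using len[of n] i(2) by simp
    moreover have "set (rs n) \<subseteq> pa_trans A" using rs by (simp add: path_def)
    ultimately have "rs n ! j \<in> pa_trans A" by blast
    then have "r i \<in> pa_trans A" using ri by simp
    moreover have "tlbl (r i) = \<alpha> i"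
      using ri flat i rs len[of n] unfolding flat_iff by (metis nth_map)
    moreover have "tsrc (r i) = ostate A r i"
      using ri i ost[of j n] chain_nth[of "fs n" "rs n" "fs (Suc n)" j] rs len[of n]
      by (auto simp: path_def)
    ultimately show "r i \<in> pa_trans A \<and> tlbl (r i) = \<alpha> i \<and>
         tsrc (r i) = (if i = 0 then pa_init A else ttgt (r (i - 1)))"
      by (simp add: ostate_def)
  qed
  have finpos: "\<exists>n. k = st ws (Suc n)" if "k \<ge> 1" "ostate A r k \<in> pa_final A" for k
  proof -
    obtain n j where i: "k = st ws n + j" "j < length (ws n)" using NJ by blast
    have "j = 0"
    proof (rule ccontr)
      assume "j \<noteq> 0"
      then have "ostate A r k = ttgt (rs n ! (j - 1))" using ost i by simp
      moreover have "rs n ! (j - 1) \<in> set (butlast (rs n))"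
      proof -
        have jl: "j - 1 < length (butlast (rs n))" using i(2) len[of n] \<open>j \<noteq> 0\<close> by simp
        then have "butlast (rs n) ! (j - 1) \<in> set (butlast (rs n))" by (rule nth_mem)
        then show ?thesis using nth_butlast[OF jl] by simp
      qed
      ultimately show False using rs that by auto
    qed
    moreover have "n \<noteq> 0" using i that \<open>j = 0\<close> by (cases n) auto
    ultimately show ?thesis using i by (cases n) auto
  qed
  have "spba_accepting A r"
    unfolding spba_accepting_def
  proof
    show "\<exists>\<^sub>\<infinity>k. k \<ge> 1 \<and> ostate A r k \<in> pa_final A"
      unfolding INFM_nat
    proof
      fix m
      have "st ws (Suc m) \<ge> Suc m" using st_ge[OF ne] by blast
      then show "\<exists>k>m. k \<ge> 1 \<and> ostate A r k \<in> pa_final A"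
        using ost0[of "Suc m"] fS by (intro exI[of _ "st ws (Suc m)"]) auto
    qed
  next
    show "\<forall>i j. i < j \<and> (i = 0 \<or> ostate A r i \<in> pa_final A) \<and> ostate A r j \<in> pa_final A \<and>
            (\<forall>k. i < k \<and> k < j \<longrightarrow> ostate A r k \<notin> pa_final A) \<longrightarrow>
            rho (pa_dim A) (map r [i..<j]) \<in> pa_constr A"
    proof (intro allI impI, elim conjE)
      fix i j
      assume ij: "i < j" "i = 0 \<or> ostate A r i \<in> pa_final A" "ostate A r j \<in> pa_final A"
        and gap: "\<forall>k. i < k \<and> k < j \<longrightarrow> ostate A r k \<notin> pa_final A"
      obtain n where n: "i = st ws n"
      proof (cases "i = 0")
        case True then show ?thesis using that[of 0] by simp
      next
        case False then show ?thesis using finpos[of i] ij that by (metis less_one not_less)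
      qed
      have "j \<ge> 1" using ij by simp
      then obtain m where m: "j = st ws (Suc m)" using finpos[of j] ij(3) by blast
      have "n < Suc m"
      proof (rule ccontr)
        assume "\<not> n < Suc m"
        then have "st ws (Suc m) \<le> st ws n" by (intro st_mono) simp
        then show False using ij n m by simp
      qed
      moreover have "\<not> n < m"
      proof
        assume "n < m"
        then have "st ws (Suc n) < st ws (Suc m)" using st_less[OF ne, of "Suc n" "Suc m"] by blast
        then have "i < st ws (Suc n)" "st ws (Suc n) < j"
          using st_less[OF ne lessI, of n] n m by auto
        then show False using gap ost0[of "Suc n"] fS by auto
      qed
      ultimately have nm: "m = n" by simp
      have "map r [i..<j] = rs n"
      proof (rule nth_equalityI)
        show "length (map r [i..<j]) = length (rs n)" using n m nm len by simp
        fix k assume "k < length (map r [i..<j])"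
        then have "k < length (ws n)" using n m nm by simp
        then show "map r [i..<j] ! k = rs n ! k" using rat n m nm by simp
      qed
      then show "rho (pa_dim A) (map r [i..<j]) \<in> pa_constr A" using rs by simp
    qed
  qed
  then show ?thesis unfolding spba_lang_def using run by blast
qed

lemma L1:
  "\<alpha> \<in> spba_lang A \<longleftrightarrow> (\<exists>fs ws. fs 0 = pa_init A \<and> (\<forall>n. fs (Suc n) \<in> pa_final A) \<and>
           (\<forall>n. ws n \<in> Seg A (fs n) (fs (Suc n))) \<and> is_flat ws \<alpha>)"
  using L1_fwd L1_bwd unfolding spba_lang_def by blast



lemma tsel_simps[simp]: "tsrc (p, a, v, q) = p" "tlbl (p, a, v, q) = a" "tvec (p, a, v, q) = v" "ttgt (p, a, v, q) = q"
  by (simp_all add: tsrc_def tlbl_def tvec_def ttgt_def)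

lemma path_Nil[simp]: "path A p [] q \<longleftrightarrow> p = q"
  by (simp add: path_def)

lemma path_Cons[simp]: "path A p (t # ts) q \<longleftrightarrow> t \<in> pa_trans A \<and> tsrc t = p \<and> path A (ttgt t) ts q"
  by (auto simp: path_def)

lemma trans_split: "t = (tsrc t, tlbl t, tvec t, ttgt t)"
  by (cases t) simp

section \<open>Segment automaton\<close>

definition segPA :: "'a pa \<Rightarrow> nat \<Rightarrow> nat \<Rightarrow> 'a pa" where
  "segPA A p f = \<lparr>pa_dim = pa_dim A, pa_states = insert 0 (Suc ` pa_states A), pa_init = Suc p,
     pa_trans = {(Suc x, a, v, Suc y) | x a v y. (x, a, v, y) \<in> pa_trans A \<and> y \<notin> pa_final A} \<union>
                {(Suc x, a, v, 0) | x a v. (x, a, v, f) \<in> pa_trans A},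
     pa_final = {0}, pa_constr = pa_constr A\<rparr>"

lemma segPA_sel[simp]:
  "pa_dim (segPA A p f) = pa_dim A" "pa_init (segPA A p f) = Suc p" "pa_final (segPA A p f) = {0}"
  "pa_constr (segPA A p f) = pa_constr A" "pa_states (segPA A p f) = insert 0 (Suc ` pa_states A)"
  by (simp_all add: segPA_def)

lemma segPA_trans:
  "t \<in> pa_trans (segPA A p f) \<longleftrightarrow>
    (\<exists>x a v y. t = (Suc x, a, v, Suc y) \<and> (x, a, v, y) \<in> pa_trans A \<and> y \<notin> pa_final A) \<or>
    (\<exists>x a v. t = (Suc x, a, v, 0) \<and> (x, a, v, f) \<in> pa_trans A)"
  by (simp add: segPA_def)

lemma segPA_path1:
  assumes "rs \<noteq> []" "path A x rs f" "\<forall>t\<in>set (butlast rs). ttgt t \<notin> pa_final A"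
  shows "\<exists>rs'. path (segPA A p f) (Suc x) rs' 0 \<and> map tlbl rs' = map tlbl rs \<and> map tvec rs' = map tvec rs"
  using assms
proof (induction rs arbitrary: x)
  case Nil then show ?case by simp
next
  case (Cons t ts)
  show ?case
  proof (cases "ts = []")
    case True
    then have "t = (x, tlbl t, tvec t, f)" "t \<in> pa_trans A" using Cons.prems trans_split[of t] by auto
    then have "(Suc x, tlbl t, tvec t, 0) \<in> pa_trans (segPA A p f)" unfolding segPA_trans by metis
    then show ?thesis using True by (intro exI[of _ "[(Suc x, tlbl t, tvec t, 0)]"]) simp
  next
    case False
    have t: "t = (x, tlbl t, tvec t, ttgt t)" "t \<in> pa_trans A" "ttgt t \<notin> pa_final A"
      using Cons.prems trans_split[of t] False by auto
    obtain rs' where rs': "path (segPA A p f) (Suc (ttgt t)) rs' 0" "map tlbl rs' = map tlbl ts"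
      "map tvec rs' = map tvec ts"
      using Cons.IH[of "ttgt t"] Cons.prems False by auto
    have "(Suc x, tlbl t, tvec t, Suc (ttgt t)) \<in> pa_trans (segPA A p f)"
      unfolding segPA_trans using t by metis
    then show ?thesis using rs' by (intro exI[of _ "(Suc x, tlbl t, tvec t, Suc (ttgt t)) # rs'"]) simp
  qed
qed

lemma segPA_path2:
  assumes "path (segPA A p f) (Suc x) rs' 0"
  shows "\<exists>rs. rs \<noteq> [] \<and> path A x rs f \<and> (\<forall>t\<in>set (butlast rs). ttgt t \<notin> pa_final A) \<and>
     map tlbl rs' = map tlbl rs \<and> map tvec rs' = map tvec rs"
  using assms
proof (induction rs' arbitrary: x)
  case Nil then show ?case by simp
next
  case (Cons t' ts')
  have t': "t' \<in> pa_trans (segPA A p f)" "tsrc t' = Suc x" "path (segPA A p f) (ttgt t') ts' 0"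
    using Cons.prems by auto
  from t'(1) show ?case unfolding segPA_trans
  proof (elim disjE exE conjE)
    fix x' a v y assume h: "t' = (Suc x', a, v, Suc y)" "(x', a, v, y) \<in> pa_trans A" "y \<notin> pa_final A"
    then have "x' = x" using t' by simp
    obtain rs where rs: "rs \<noteq> []" "path A y rs f" "\<forall>t\<in>set (butlast rs). ttgt t \<notin> pa_final A"
      "map tlbl ts' = map tlbl rs" "map tvec ts' = map tvec rs"
      using Cons.IH[of y] t' h by auto
    show ?thesis using rs h \<open>x' = x\<close> by (intro exI[of _ "(x, a, v, y) # rs"]) auto
  next
    fix x' a v assume h: "t' = (Suc x', a, v, 0)" "(x', a, v, f) \<in> pa_trans A"
    then have "x' = x" using t' by simp
    have "ts' = []"
    proof (cases ts')
      case (Cons u us)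
      then have "u \<in> pa_trans (segPA A p f)" "tsrc u = 0" using t'(3) h by auto
      then show ?thesis unfolding segPA_trans by auto
    qed
    then show ?thesis using h \<open>x' = x\<close> by (intro exI[of _ "[(x, a, v, f)]"]) auto
  qed
qed

lemma rho_cong: "map tvec rs = map tvec rs' \<Longrightarrow> rho d rs = rho d rs'"
  by (simp add: rho_def)

lemma segPA_lang: "pa_lang (segPA A p f) = Seg A p f"
proof (intro set_eqI iffI)
  fix w assume "w \<in> pa_lang (segPA A p f)"
  then obtain rs' where rs': "w = map tlbl rs'" "path (segPA A p f) (Suc p) rs' 0" "rho (pa_dim A) rs' \<in> pa_constr A"
    unfolding pa_lang_path by auto
  obtain rs where "rs \<noteq> []" "path A p rs f" "\<forall>t\<in>set (butlast rs). ttgt t \<notin> pa_final A"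
     "map tlbl rs' = map tlbl rs" "map tvec rs' = map tvec rs"
    using segPA_path2[OF rs'(2)] by blast
  then show "w \<in> Seg A p f" unfolding Seg_def using rs' rho_cong[of rs' rs "pa_dim A"]
    by (intro CollectI exI[of _ rs]) simp
next
  fix w assume "w \<in> Seg A p f"
  then obtain rs where rs: "w = map tlbl rs" "rs \<noteq> []" "path A p rs f" "\<forall>t\<in>set (butlast rs). ttgt t \<notin> pa_final A"
    "rho (pa_dim A) rs \<in> pa_constr A"
    unfolding Seg_def by blast
  obtain rs' where "path (segPA A p f) (Suc p) rs' 0" "map tlbl rs' = map tlbl rs" "map tvec rs' = map tvec rs"
    using segPA_path1[OF rs(2-4)] by blast
  then show "w \<in> pa_lang (segPA A p f)" unfolding pa_lang_path using rs rho_cong[of rs' rs "pa_dim A"]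
    by (intro CollectI exI[of _ rs'] exI[of _ 0]) simp
qed

lemma segPA_wf:
  assumes "wf_pa A" "p \<in> pa_states A"
  shows "wf_pa (segPA A p f)"
proof -
  have "pa_trans (segPA A p f) \<subseteq> (\<lambda>(x, a, v, y). (Suc x, a, v, Suc y)) ` pa_trans A \<union> (\<lambda>(x, a, v, y). (Suc x, a, v, 0)) ` pa_trans A"
  proof
    fix t assume "t \<in> pa_trans (segPA A p f)"
    then show "t \<in> (\<lambda>(x, a, v, y). (Suc x, a, v, Suc y)) ` pa_trans A \<union> (\<lambda>(x, a, v, y). (Suc x, a, v, 0)) ` pa_trans A"
      unfolding segPA_trans
    proof (elim disjE exE conjE)
      fix x a v y assume "t = (Suc x, a, v, Suc y)" "(x, a, v, y) \<in> pa_trans A"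
      then show ?thesis by (intro UnI1) (rule image_eqI[where x="(x, a, v, y)"]; simp)
    next
      fix x a v assume "t = (Suc x, a, v, 0)" "(x, a, v, f) \<in> pa_trans A"
      then show ?thesis by (intro UnI2) (rule image_eqI[where x="(x, a, v, f)"]; simp)
    qed
  qed
  then have "finite (pa_trans (segPA A p f))"
    using assms(1) unfolding wf_pa_def by (meson finite_Un finite_imageI finite_subset)
  moreover have "x \<in> pa_states (segPA A p f) \<and> y \<in> pa_states (segPA A p f) \<and> length v = pa_dim (segPA A p f)"
    if "(x, a, v, y) \<in> pa_trans (segPA A p f)" for x a v y
    using that assms(1) unfolding segPA_trans wf_pa_def by fastforce
  then have "\<forall>(x, a, v, y) \<in> pa_trans (segPA A p f).
        x \<in> pa_states (segPA A p f) \<and> y \<in> pa_states (segPA A p f) \<and> length v = pa_dim (segPA A p f)"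
    by blast
  ultimately show ?thesis using assms unfolding wf_pa_def by auto
qed

lemma Seg_recognizable: "wf_pa A \<Longrightarrow> p \<in> pa_states A \<Longrightarrow> parikh_recognizable (Seg A p f)"
  unfolding parikh_recognizable_def using segPA_wf segPA_lang by metis

section \<open>Leaves\<close>

lemma path_rtrancl: "path A p rs q \<Longrightarrow> (p, q) \<in> (pa_edges A)\<^sup>*"
proof (induction rs arbitrary: p)
  case Nil then show ?case by simp
next
  case (Cons t ts)
  then have "(p, ttgt t) \<in> pa_edges A" unfolding pa_edges_def using trans_split[of t] by auto metis
  then show ?case using Cons by (meson converse_rtrancl_into_rtrancl path_Cons)
qed

lemma leaf_closed:
  assumes "is_leaf_scc A S" "u \<in> S" "(u, v) \<in> (pa_edges A)\<^sup>*"
  shows "v \<in> S"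
  using assms(3,2)
proof (induction rule: rtrancl_induct)
  case base then show ?case .
next
  case (step y z) then show ?case using assms(1) unfolding is_leaf_scc_def by blast
qed

lemma Seg_nonempty_word: "w \<in> Seg A p q \<Longrightarrow> w \<noteq> []"
  unfolding Seg_def by auto

lemma Seg_rtrancl: "w \<in> Seg A p q \<Longrightarrow> (p, q) \<in> (pa_edges A)\<^sup>*"
proof -
  assume "w \<in> Seg A p q"
  then obtain rs where "path A p rs q" unfolding Seg_def by blast
  then show ?thesis by (rule path_rtrancl)
qed

lemma leaf_finite: "wf_pa A \<Longrightarrow> is_leaf_scc A S \<Longrightarrow> finite S"
proof -
  assume "wf_pa A" "is_leaf_scc A S"
  then obtain q where "S = scc_of A q" unfolding is_leaf_scc_def sccs_def by blast
  then have "S \<subseteq> pa_states A" unfolding scc_of_def by blast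
  then show ?thesis using \<open>wf_pa A\<close> unfolding wf_pa_def using finite_subset by blast
qed

lemma dir2:
  assumes wf: "wf_pa A" and fl: "final_only_in_leaves A"
  shows "spba_lang A = (\<Union>f\<in>pa_final A. conc_omega (Seg A (pa_init A) f) (omega_pow (Seg A f f)))"
proof (intro set_eqI iffI)
  fix \<alpha> assume "\<alpha> \<in> spba_lang A"
  then obtain fs ws where a: "fs 0 = pa_init A" "\<forall>n. fs (Suc n) \<in> pa_final A"
    "\<forall>n. ws n \<in> Seg A (fs n) (fs (Suc n))" "is_flat ws \<alpha>"
    unfolding L1 by blast
  define f where "f = fs 1"
  have fF: "f \<in> pa_final A" using a(2) by (simp add: f_def)
  obtain S where S: "is_leaf_scc A S" "f \<in> S" using fl fF unfolding final_only_in_leaves_def by blast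
  have reach: "(f, fs (Suc n)) \<in> (pa_edges A)\<^sup>*" for n
  proof (induction n)
    case 0 then show ?case by (simp add: f_def)
  next
    case (Suc n)
    then show ?case using Seg_rtrancl a(3) by (meson rtrancl_trans)
  qed
  have fsn: "fs (Suc n) = f" for n
  proof -
    have "fs (Suc n) \<in> S \<inter> pa_final A" using leaf_closed[OF S(1,2) reach] a(2) by blast
    moreover have "f \<in> S \<inter> pa_final A" using S fF by blast
    moreover have "card (S \<inter> pa_final A) \<le> 1" using fl S(1) unfolding final_only_in_leaves_def by blast
    moreover have "finite (S \<inter> pa_final A)" using leaf_finite[OF wf S(1)] by blast
    ultimately have "\<forall>a\<in>S \<inter> pa_final A. \<forall>b\<in>S \<inter> pa_final A. a = b"
      using card_le_Suc0_iff_eq[of "S \<inter> pa_final A"] by simp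
    then show ?thesis using \<open>fs (Suc n) \<in> S \<inter> pa_final A\<close> \<open>f \<in> S \<inter> pa_final A\<close> by blast
  qed
  have "\<alpha> \<in> conc_omega (Seg A (pa_init A) f) (omega_pow (Seg A f f))"
    unfolding conc_omega_flat
  proof (intro exI conjI allI)
    show "ws 0 \<in> Seg A (pa_init A) f" using a(1,3) fsn[of 0] by metis
    fix n
    show "ws (Suc n) \<in> Seg A f f" using a(3) fsn by metis
    show "ws (Suc n) \<noteq> []" using a(3) Seg_nonempty_word by metis
  qed (rule a(4))
  then show "\<alpha> \<in> (\<Union>f\<in>pa_final A. conc_omega (Seg A (pa_init A) f) (omega_pow (Seg A f f)))"
    using fF by blast
next
  fix \<alpha> assume "\<alpha> \<in> (\<Union>f\<in>pa_final A. conc_omega (Seg A (pa_init A) f) (omega_pow (Seg A f f)))"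
  then obtain f where fF: "f \<in> pa_final A" and "\<alpha> \<in> conc_omega (Seg A (pa_init A) f) (omega_pow (Seg A f f))"
    by blast
  then obtain ws where ws: "ws 0 \<in> Seg A (pa_init A) f" "\<forall>n. ws (Suc n) \<in> Seg A f f" "is_flat ws \<alpha>"
    unfolding conc_omega_flat by blast
  define fs where "fs = case_nat (pa_init A) (\<lambda>_. f)"
  have "\<forall>n. ws n \<in> Seg A (fs n) (fs (Suc n))"
  proof
    fix n show "ws n \<in> Seg A (fs n) (fs (Suc n))" using ws by (cases n) (auto simp: fs_def)
  qed
  then show "\<alpha> \<in> spba_lang A" unfolding L1 using fF ws(3)
    by (intro exI[of _ fs] exI[of _ ws]) (auto simp: fs_def)
qed

lemma dir2_list:
  assumes wf: "wf_pa A" and fl: "final_only_in_leaves A"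
  shows "\<exists>UVs :: ('a list set \<times> 'a list set) list.
            (\<forall>(U, V) \<in> set UVs. parikh_recognizable U \<and> parikh_recognizable V) \<and>
            spba_lang A = (\<Union>(U, V) \<in> set UVs. conc_omega U (omega_pow V))"
proof -
  have finF: "finite (pa_final A)" using wf unfolding wf_pa_def by (meson finite_subset)
  define UVs where "UVs = map (\<lambda>f. (Seg A (pa_init A) f, Seg A f f)) (sorted_list_of_set (pa_final A))"
  have "\<forall>(U, V) \<in> set UVs. parikh_recognizable U \<and> parikh_recognizable V"
    unfolding UVs_def using finF wf Seg_recognizable unfolding wf_pa_def by fastforce
  moreover have "spba_lang A = (\<Union>(U, V) \<in> set UVs. conc_omega U (omega_pow V))"
    unfolding dir2[OF wf fl] UVs_def using finF by auto
  ultimately show ?thesis by blast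
qed



lemma wf_len: "wf_pa A \<Longrightarrow> (p, a, v, q) \<in> pa_trans A \<Longrightarrow> length v = pa_dim A"
  unfolding wf_pa_def by fast

lemma wf_src: "wf_pa A \<Longrightarrow> (p, a, v, q) \<in> pa_trans A \<Longrightarrow> p \<in> pa_states A"
  unfolding wf_pa_def by fast

lemma wf_tgt: "wf_pa A \<Longrightarrow> (p, a, v, q) \<in> pa_trans A \<Longrightarrow> q \<in> pa_states A"
  unfolding wf_pa_def by fast

lemma path_rho_len: "wf_pa A \<Longrightarrow> path A p rs q \<Longrightarrow> length (rho (pa_dim A) rs) = pa_dim A"
proof (induction rs arbitrary: p)
  case Nil then show ?case by simp
next
  case (Cons t ts)
  then have "length (tvec t) = pa_dim A" using wf_len[of A "tsrc t" "tlbl t" "tvec t" "ttgt t"] trans_split[of t] by auto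
  then show ?case using Cons by auto
qed

lemma vadd_blocks:
  "length a = length a' \<Longrightarrow> length b = length b' \<Longrightarrow> vadd (a @ b @ c) (a' @ b' @ c') = vadd a a' @ vadd b b' @ vadd c c'"
  by (simp add: vadd_append)

lemma path_trancl: "path A p rs q \<Longrightarrow> rs \<noteq> [] \<Longrightarrow> (p, q) \<in> (pa_edges A)\<^sup>+"
proof (induction rs arbitrary: p)
  case Nil then show ?case by simp
next
  case (Cons t ts)
  then have e: "(p, ttgt t) \<in> pa_edges A" unfolding pa_edges_def using trans_split[of t] by auto metis
  show ?case
  proof (cases "ts = []")
    case True then show ?thesis using e Cons by auto
  next
    case False then show ?thesis using e Cons by (meson path_Cons trancl_into_trancl2)
  qed
qed

section \<open>Construction for a single pair U V\<close>

definition eU :: "nat \<Rightarrow> nat" where "eU q = 3 * q + 1"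
definition eV :: "nat \<Rightarrow> nat" where "eV q = 3 * q + 2"

lemma enc_simps[simp]: "eU p \<noteq> 0" "eV p \<noteq> 0" "eU p \<noteq> eV q" "eV q \<noteq> eU p"
  "eU p = eU q \<longleftrightarrow> p = q" "eV p = eV q \<longleftrightarrow> p = q"
  "0 \<noteq> eU p" "0 \<noteq> eV p" "0 < eU p" "0 < eV p"
  unfolding eU_def eV_def by presburger+

definition useful :: "'a pa \<Rightarrow> nat \<Rightarrow> bool" where
  "useful R q \<longleftrightarrow> (\<exists>g\<in>pa_final R. (q, g) \<in> (pa_edges R)\<^sup>+)"

definition tgtV :: "'a pa \<Rightarrow> nat \<Rightarrow> nat set" where
  "tgtV R q = (if useful R q then {eV q} else {}) \<union> (if q \<in> pa_final R then {0} else {})"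

lemma tgtV_0: "0 \<in> tgtV R q \<longleftrightarrow> q \<in> pa_final R"
  unfolding tgtV_def by auto

lemma tgtV_ne0: "z \<in> tgtV R q \<Longrightarrow> z \<noteq> 0 \<Longrightarrow> z = eV q \<and> useful R q"
  unfolding tgtV_def by (auto split: if_splits)

lemma tgtV_eV: "useful R q \<Longrightarrow> eV q \<in> tgtV R q"
  unfolding tgtV_def by auto

definition Vsteps :: "nat \<Rightarrow> 'a pa \<Rightarrow> nat \<Rightarrow> nat \<Rightarrow> nat list \<Rightarrow> 'a ptrans set" where
  "Vsteps d R src p fl = {(src, a, replicate d 0 @ y @ fl, z) | a y q z. (p, a, y, q) \<in> pa_trans R \<and> z \<in> tgtV R q}"

definition Usteps :: "nat \<Rightarrow> 'a pa \<Rightarrow> 'a ptrans set" where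
  "Usteps e P = {(eU p, a, x @ replicate e 0 @ [0, 0], eU q) | p a x q. (p, a, x, q) \<in> pa_trans P}"

definition cTrans :: "'a pa \<Rightarrow> 'a pa \<Rightarrow> 'a ptrans set" where
  "cTrans P R = Usteps (pa_dim R) P \<union> (\<Union>p. Vsteps (pa_dim P) R (eV p) p [0, 0]) \<union>
     (\<Union>p\<in>pa_final P. Vsteps (pa_dim P) R (eU p) (pa_init R) [1, 0]) \<union>
     Vsteps (pa_dim P) R 0 (pa_init R) [0, 1]"

definition cPA :: "'a pa \<Rightarrow> 'a pa \<Rightarrow> 'a pa" where
  "cPA P R = \<lparr>pa_dim = pa_dim P + (pa_dim R + 2),
     pa_states = insert 0 (eU ` pa_states P \<union> eV ` pa_states R),
     pa_init = eU (pa_init P), pa_trans = cTrans P R, pa_final = {0},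
     pa_constr = vprod (pa_constr P) (vprod (pa_constr R) {[1, 0]}) \<union>
                 vprod {replicate (pa_dim P) 0} (vprod (pa_constr R) {[0, 1]})\<rparr>"

lemma cPA_sel[simp]:
  "pa_dim (cPA P R) = pa_dim P + (pa_dim R + 2)"
  "pa_states (cPA P R) = insert 0 (eU ` pa_states P \<union> eV ` pa_states R)"
  "pa_init (cPA P R) = eU (pa_init P)" "pa_trans (cPA P R) = cTrans P R" "pa_final (cPA P R) = {0}"
  "pa_constr (cPA P R) = vprod (pa_constr P) (vprod (pa_constr R) {[1, 0]}) \<union>
                 vprod {replicate (pa_dim P) 0} (vprod (pa_constr R) {[0, 1]})"
  by (simp_all add: cPA_def)

lemma Vsteps_src: "t \<in> Vsteps d R src p fl \<Longrightarrow> tsrc t = src"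
  unfolding Vsteps_def by auto

lemma Usteps_src: "t \<in> Usteps e P \<Longrightarrow> \<exists>p. tsrc t = eU p"
  unfolding Usteps_def by auto

lemma notin_Vsteps: "tsrc t \<noteq> src \<Longrightarrow> t \<notin> Vsteps d R src p fl"
  using Vsteps_src by blast

lemma notin_Usteps: "(\<And>p. tsrc t \<noteq> eU p) \<Longrightarrow> t \<notin> Usteps e P"
  using Usteps_src by blast

lemma cTrans_cases:
  assumes "t \<in> cTrans P R"
  obtains (U) "t \<in> Usteps (pa_dim R) P"
  | (V) x where "t \<in> Vsteps (pa_dim P) R (eV x) x [0, 0]" "tsrc t = eV x"
  | (J) x where "x \<in> pa_final P" "t \<in> Vsteps (pa_dim P) R (eU x) (pa_init R) [1, 0]" "tsrc t = eU x"
  | (F) "t \<in> Vsteps (pa_dim P) R 0 (pa_init R) [0, 1]" "tsrc t = 0"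
proof -
  from assms have "t \<in> Usteps (pa_dim R) P \<or> (\<exists>x. t \<in> Vsteps (pa_dim P) R (eV x) x [0, 0]) \<or>
     (\<exists>x\<in>pa_final P. t \<in> Vsteps (pa_dim P) R (eU x) (pa_init R) [1, 0]) \<or>
     t \<in> Vsteps (pa_dim P) R 0 (pa_init R) [0, 1]" unfolding cTrans_def by blast
  then show thesis
  proof (elim disjE exE bexE)
    assume "t \<in> Usteps (pa_dim R) P" then show thesis by (rule U)
  next
    fix x assume "t \<in> Vsteps (pa_dim P) R (eV x) x [0, 0]"
    then show thesis using V Vsteps_src by blast
  next
    fix x assume "x \<in> pa_final P" "t \<in> Vsteps (pa_dim P) R (eU x) (pa_init R) [1, 0]"
    then show thesis using J Vsteps_src by blast
  next
    assume a: "t \<in> Vsteps (pa_dim P) R 0 (pa_init R) [0, 1]"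
    show thesis by (rule F[OF a Vsteps_src[OF a]])
  qed
qed

lemma cTrans_eV:
  assumes "t \<in> cTrans P R" "tsrc t = eV p"
  shows "t \<in> Vsteps (pa_dim P) R (eV p) p [0, 0]"
  using assms(1)
proof (cases rule: cTrans_cases)
  case U
  then obtain p' where "tsrc t = eU p'" using Usteps_src by blast
  then show ?thesis using assms(2) by simp
qed (use assms(2) in auto)

lemma cTrans_0:
  assumes "t \<in> cTrans P R" "tsrc t = 0"
  shows "t \<in> Vsteps (pa_dim P) R 0 (pa_init R) [0, 1]"
  using assms(1)
proof (cases rule: cTrans_cases)
  case U
  then obtain p' where "tsrc t = eU p'" using Usteps_src by blast
  then show ?thesis using assms(2) by simp
qed (use assms(2) in auto)

lemma cTrans_eU:
  assumes "t \<in> cTrans P R" "tsrc t = eU p"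
  shows "t \<in> Usteps (pa_dim R) P \<or> (p \<in> pa_final P \<and> t \<in> Vsteps (pa_dim P) R (eU p) (pa_init R) [1, 0])"
  using assms(1)
proof (cases rule: cTrans_cases)
qed (use assms(2) in auto)

lemma rho_single: "length v = d \<Longrightarrow> rho d [(s, a, v, z)] = v"
  by (simp add: rho_def)

lemma Vsteps_sub: 
  "Vsteps (pa_dim P) R (eV p) p [0, 0] \<subseteq> cTrans P R"
  "Vsteps (pa_dim P) R 0 (pa_init R) [0, 1] \<subseteq> cTrans P R"
  "p \<in> pa_final P \<Longrightarrow> Vsteps (pa_dim P) R (eU p) (pa_init R) [1, 0] \<subseteq> cTrans P R"
  unfolding cTrans_def by blast+

lemma Usteps_sub: "Usteps (pa_dim R) P \<subseteq> cTrans P R"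
  unfolding cTrans_def by blast

lemma VL:
  assumes wfR: "wf_pa R"
  shows "path (cPA P R) src rs 0 \<Longrightarrow> rs \<noteq> [] \<Longrightarrow> hd rs \<in> Vsteps (pa_dim P) R src p fl \<Longrightarrow>
    (\<forall>t\<in>set (butlast rs). ttgt t \<noteq> 0) \<Longrightarrow> length fl = 2 \<Longrightarrow>
    \<exists>rs' g. path R p rs' g \<and> g \<in> pa_final R \<and> rs' \<noteq> [] \<and> map tlbl rs = map tlbl rs' \<and>
      rho (pa_dim P + (pa_dim R + 2)) rs = replicate (pa_dim P) 0 @ rho (pa_dim R) rs' @ fl"
proof (induction rs arbitrary: src p fl)
  case Nil then show ?case by simp
next
  case (Cons t ts)
  obtain a y q z where t: "t = (src, a, replicate (pa_dim P) 0 @ y @ fl, z)" "(p, a, y, q) \<in> pa_trans R"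
    "z \<in> tgtV R q"
    using Cons.prems(3) unfolding Vsteps_def by auto
  have ly: "length y = pa_dim R" using wf_len[OF wfR t(2)] .
  obtain f1 f2 where fl: "fl = [f1, f2]" using Cons.prems(5)
    by (metis One_nat_def Suc_1 length_0_conv length_Suc_conv)
  have pts: "path (cPA P R) z ts 0" using Cons.prems(1) t by simp
  show ?case
  proof (cases "ts = []")
    case True
    then have "z = 0" using pts by simp
    then have "q \<in> pa_final R" using t(3) tgtV_0 by metis
    moreover have "rho (pa_dim P + (pa_dim R + 2)) (t # ts) = replicate (pa_dim P) 0 @ rho (pa_dim R) [(p, a, y, q)] @ fl"
      using True t ly fl by (simp del: rho_Cons rho_Nil add: rho_single)
    ultimately show ?thesis using t True
      by (intro exI[of _ "[(p, a, y, q)]"] exI[of _ q]) auto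
  next
    case False
    then have "z \<noteq> 0" using Cons.prems(4) t by simp
    then have zq: "z = eV q" "useful R q" using tgtV_ne0[OF t(3)] by auto
    have "hd ts \<in> cTrans P R" "tsrc (hd ts) = eV q" using pts False zq by (cases ts; auto)+
    then have hd: "hd ts \<in> Vsteps (pa_dim P) R (eV q) q [0, 0]" by (rule cTrans_eV)
    have "\<forall>t\<in>set (butlast ts). ttgt t \<noteq> 0" using Cons.prems(4) False by simp
    then obtain rs' g where rs': "path R q rs' g" "g \<in> pa_final R" "rs' \<noteq> []" "map tlbl ts = map tlbl rs'"
      "rho (pa_dim P + (pa_dim R + 2)) ts = replicate (pa_dim P) 0 @ rho (pa_dim R) rs' @ [0, 0]"
      using Cons.IH[OF _ False hd] pts zq by auto
    have lr: "length (rho (pa_dim R) rs') = pa_dim R" using path_rho_len[OF wfR rs'(1)] .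
    have "rho (pa_dim P + (pa_dim R + 2)) (t # ts) = replicate (pa_dim P) 0 @ rho (pa_dim R) ((p, a, y, q) # rs') @ fl"
      using t rs'(5) ly lr fl by (simp add: vadd_blocks)
    then show ?thesis using t rs'
      by (intro exI[of _ "(p, a, y, q) # rs'"] exI[of _ g]) auto
  qed
qed

lemma VR:
  assumes wfR: "wf_pa R"
  shows "Vsteps (pa_dim P) R src p fl \<subseteq> cTrans P R \<Longrightarrow> path R p rs' g \<Longrightarrow> g \<in> pa_final R \<Longrightarrow>
    rs' \<noteq> [] \<Longrightarrow> length fl = 2 \<Longrightarrow>
    \<exists>rs. path (cPA P R) src rs 0 \<and> rs \<noteq> [] \<and> (\<forall>t\<in>set (butlast rs). ttgt t \<noteq> 0) \<and>
      map tlbl rs = map tlbl rs' \<and>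
      rho (pa_dim P + (pa_dim R + 2)) rs = replicate (pa_dim P) 0 @ rho (pa_dim R) rs' @ fl"
proof (induction rs' arbitrary: src p fl)
  case Nil then show ?case by simp
next
  case (Cons t' ts')
  obtain a y q where t': "t' = (p, a, y, q)" "(p, a, y, q) \<in> pa_trans R"
    using Cons.prems(2) trans_split[of t'] by (metis path_Cons)
  have ly: "length y = pa_dim R" using wf_len[OF wfR t'(2)] .
  obtain f1 f2 where fl: "fl = [f1, f2]" using Cons.prems(5)
    by (metis One_nat_def Suc_1 length_0_conv length_Suc_conv)
  have pts: "path R q ts' g" using Cons.prems(2) t' by simp
  show ?case
  proof (cases "ts' = []")
    case True
    then have "q \<in> pa_final R" using pts Cons.prems(3) by simp
    then have "(src, a, replicate (pa_dim P) 0 @ y @ fl, 0) \<in> Vsteps (pa_dim P) R src p fl"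
      unfolding Vsteps_def using t' tgtV_0 by blast
    then have tr: "(src, a, replicate (pa_dim P) 0 @ y @ fl, 0) \<in> cTrans P R" using Cons.prems(1) by blast
    have "rho (pa_dim P + (pa_dim R + 2)) [(src, a, replicate (pa_dim P) 0 @ y @ fl, 0)]
       = replicate (pa_dim P) 0 @ rho (pa_dim R) (t' # ts') @ fl"
      using True t' ly fl by (simp del: rho_Cons rho_Nil add: rho_single)
    then show ?thesis using tr True t'
      by (intro exI[of _ "[(src, a, replicate (pa_dim P) 0 @ y @ fl, 0)]"]) auto
  next
    case False
    have "(q, g) \<in> (pa_edges R)\<^sup>+" using path_trancl[OF pts False] .
    then have "useful R q" unfolding useful_def using Cons.prems(3) by blast
    then have "(src, a, replicate (pa_dim P) 0 @ y @ fl, eV q) \<in> Vsteps (pa_dim P) R src p fl"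
      unfolding Vsteps_def using t' tgtV_eV by blast
    then have tr: "(src, a, replicate (pa_dim P) 0 @ y @ fl, eV q) \<in> cTrans P R" using Cons.prems(1) by blast
    obtain rs where rs: "path (cPA P R) (eV q) rs 0" "rs \<noteq> []" "\<forall>t\<in>set (butlast rs). ttgt t \<noteq> 0"
      "map tlbl rs = map tlbl ts'"
      "rho (pa_dim P + (pa_dim R + 2)) rs = replicate (pa_dim P) 0 @ rho (pa_dim R) ts' @ [0, 0]"
      using Cons.IH[OF Vsteps_sub(1) pts Cons.prems(3) False] by auto
    have lr: "length (rho (pa_dim R) ts') = pa_dim R" using path_rho_len[OF wfR pts] .
    have "rho (pa_dim P + (pa_dim R + 2)) ((src, a, replicate (pa_dim P) 0 @ y @ fl, eV q) # rs)
       = replicate (pa_dim P) 0 @ rho (pa_dim R) (t' # ts') @ fl"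
      using t' rs(5) ly lr fl by (simp add: vadd_blocks)
    then show ?thesis using tr rs t'
      by (intro exI[of _ "(src, a, replicate (pa_dim P) 0 @ y @ fl, eV q) # rs"]) auto
  qed
qed



lemma UL:
  assumes wfP: "wf_pa P" and wfR: "wf_pa R"
  shows "path (cPA P R) (eU p) rs 0 \<Longrightarrow> rs \<noteq> [] \<Longrightarrow> (\<forall>t\<in>set (butlast rs). ttgt t \<noteq> 0) \<Longrightarrow>
   \<exists>us p' vs g. path P p us p' \<and> p' \<in> pa_final P \<and> path R (pa_init R) vs g \<and> g \<in> pa_final R \<and> vs \<noteq> [] \<and>
     map tlbl rs = map tlbl us @ map tlbl vs \<and>
     rho (pa_dim P + (pa_dim R + 2)) rs = rho (pa_dim P) us @ rho (pa_dim R) vs @ [1, 0]"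
proof (induction rs arbitrary: p)
  case Nil then show ?case by simp
next
  case (Cons t ts)
  have tt: "t \<in> cTrans P R" "tsrc t = eU p" "path (cPA P R) (ttgt t) ts 0" using Cons.prems(1) by auto
  from cTrans_eU[OF tt(1,2)] show ?case
  proof (elim disjE conjE)
    assume "t \<in> Usteps (pa_dim R) P"
    then obtain p1 a x q where t: "t = (eU p1, a, x @ replicate (pa_dim R) 0 @ [0, 0], eU q)"
      "(p1, a, x, q) \<in> pa_trans P" unfolding Usteps_def by auto
    have p1: "p1 = p" using t tt by simp
    have lx: "length x = pa_dim P" using wf_len[OF wfP t(2)] .
    have ne: "ts \<noteq> []" using tt(3) t by (cases ts) auto
    have "\<forall>t\<in>set (butlast ts). ttgt t \<noteq> 0" using Cons.prems(3) ne by simp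
    then obtain us p' vs g where r: "path P q us p'" "p' \<in> pa_final P" "path R (pa_init R) vs g" "g \<in> pa_final R"
      "vs \<noteq> []" "map tlbl ts = map tlbl us @ map tlbl vs"
      "rho (pa_dim P + (pa_dim R + 2)) ts = rho (pa_dim P) us @ rho (pa_dim R) vs @ [1, 0]"
      using Cons.IH[of q] tt(3) t ne by auto
    have l1: "length (rho (pa_dim P) us) = pa_dim P" using path_rho_len[OF wfP r(1)] .
    have l2: "length (rho (pa_dim R) vs) = pa_dim R" using path_rho_len[OF wfR r(3)] .
    have "rho (pa_dim P + (pa_dim R + 2)) (t # ts) = rho (pa_dim P) ((p, a, x, q) # us) @ rho (pa_dim R) vs @ [1, 0]"
      using t r(7) lx l1 l2 by (simp add: vadd_blocks)
    then show ?thesis using r t p1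
      by (intro exI[of _ "(p, a, x, q) # us"] exI[of _ p'] exI[of _ vs] exI[of _ g]) auto
  next
    assume pF: "p \<in> pa_final P" and tv: "t \<in> Vsteps (pa_dim P) R (eU p) (pa_init R) [1, 0]"
    obtain vs g where r: "path R (pa_init R) vs g" "g \<in> pa_final R" "vs \<noteq> []" "map tlbl (t # ts) = map tlbl vs"
      "rho (pa_dim P + (pa_dim R + 2)) (t # ts) = replicate (pa_dim P) 0 @ rho (pa_dim R) vs @ [1, 0]"
    proof -
      have "hd (t # ts) \<in> Vsteps (pa_dim P) R (eU p) (pa_init R) [1, 0]" using tv by simp
      moreover have "length [1::nat, 0] = 2" by simp
      ultimately show thesis using VL[OF wfR Cons.prems(1) Cons.prems(2) _ Cons.prems(3)] that by blast
    qed
    then show ?thesis using pF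
      by (intro exI[of _ "[]"] exI[of _ p] exI[of _ vs] exI[of _ g]) auto
  qed
qed

lemma UR:
  assumes wfP: "wf_pa P" and wfR: "wf_pa R" and p': "p' \<in> pa_final P"
    and vs: "path R (pa_init R) vs g" "g \<in> pa_final R" "vs \<noteq> []"
  shows "path P p us p' \<Longrightarrow> \<exists>rs. path (cPA P R) (eU p) rs 0 \<and> rs \<noteq> [] \<and> (\<forall>t\<in>set (butlast rs). ttgt t \<noteq> 0) \<and>
     map tlbl rs = map tlbl us @ map tlbl vs \<and>
     rho (pa_dim P + (pa_dim R + 2)) rs = rho (pa_dim P) us @ rho (pa_dim R) vs @ [1, 0]"
proof (induction us arbitrary: p)
  case Nil
  then have "p = p'" by simp
  then obtain rs where "path (cPA P R) (eU p) rs 0 \<and> rs \<noteq> [] \<and> (\<forall>t\<in>set (butlast rs). ttgt t \<noteq> 0) \<and>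
      map tlbl rs = map tlbl vs \<and>
      rho (pa_dim P + (pa_dim R + 2)) rs = replicate (pa_dim P) 0 @ rho (pa_dim R) vs @ [1, 0]"
    using VR[OF wfR Vsteps_sub(3)[OF p'[folded \<open>p = p'\<close>]] vs] by auto
  then show ?case by (intro exI[of _ rs]) simp
next
  case (Cons t' ts')
  obtain a x q where t': "t' = (p, a, x, q)" "(p, a, x, q) \<in> pa_trans P" "path P q ts' p'"
    using Cons.prems trans_split[of t'] by (metis path_Cons)
  have lx: "length x = pa_dim P" using wf_len[OF wfP t'(2)] .
  obtain rs where rs: "path (cPA P R) (eU q) rs 0" "rs \<noteq> []" "\<forall>t\<in>set (butlast rs). ttgt t \<noteq> 0"
     "map tlbl rs = map tlbl ts' @ map tlbl vs"
     "rho (pa_dim P + (pa_dim R + 2)) rs = rho (pa_dim P) ts' @ rho (pa_dim R) vs @ [1, 0]"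
    using Cons.IH[OF t'(3)] by blast
  define t where "t = (eU p, a, x @ replicate (pa_dim R) 0 @ [0, 0], eU q)"
  have "t \<in> Usteps (pa_dim R) P" unfolding Usteps_def t_def using t'(2) by blast
  then have tr: "t \<in> cTrans P R" using Usteps_sub by blast
  have l1: "length (rho (pa_dim P) ts') = pa_dim P" using path_rho_len[OF wfP t'(3)] .
  have l2: "length (rho (pa_dim R) vs) = pa_dim R" using path_rho_len[OF wfR vs(1)] .
  have "rho (pa_dim P + (pa_dim R + 2)) (t # rs) = rho (pa_dim P) (t' # ts') @ rho (pa_dim R) vs @ [1, 0]"
    using t' rs(5) lx l1 l2 by (simp add: vadd_blocks t_def)
  then show ?case using tr rs t'
    by (intro exI[of _ "t # rs"]) (auto simp: t_def)
qed

lemma cconstr1: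
  assumes "semilinear (pa_dim P) (pa_constr P)" "semilinear (pa_dim R) (pa_constr R)"
    "length a = pa_dim P" "length b = pa_dim R"
  shows "a @ b @ [1, 0] \<in> pa_constr (cPA P R) \<longleftrightarrow> a \<in> pa_constr P \<and> b \<in> pa_constr R"
proof -
  have lP: "\<forall>x\<in>pa_constr P. length x = pa_dim P" using semilinear_length[OF assms(1)] by blast
  have lR: "\<forall>x\<in>pa_constr R. length x = pa_dim R" using semilinear_length[OF assms(2)] by blast
  have "a @ b @ [1, 0] \<notin> vprod {replicate (pa_dim P) 0} (vprod (pa_constr R) {[0, 1]})"
    using vprod_mem[of "{replicate (pa_dim P) 0}" "pa_dim P" a] vprod_mem[OF lR assms(4)] assms(3) by auto
  moreover have "a @ b @ [1, 0] \<in> vprod (pa_constr P) (vprod (pa_constr R) {[1, 0]}) \<longleftrightarrow> a \<in> pa_constr P \<and> b \<in> pa_constr R"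
    using vprod_mem[OF lP assms(3)] vprod_mem[OF lR assms(4)] by auto
  ultimately show ?thesis by simp
qed

lemma cconstr2:
  assumes "semilinear (pa_dim P) (pa_constr P)" "semilinear (pa_dim R) (pa_constr R)"
    "length b = pa_dim R"
  shows "replicate (pa_dim P) 0 @ b @ [0, 1] \<in> pa_constr (cPA P R) \<longleftrightarrow> b \<in> pa_constr R"
proof -
  have lP: "\<forall>x\<in>pa_constr P. length x = pa_dim P" using semilinear_length[OF assms(1)] by blast
  have lR: "\<forall>x\<in>pa_constr R. length x = pa_dim R" using semilinear_length[OF assms(2)] by blast
  have "replicate (pa_dim P) 0 @ b @ [0, 1] \<notin> vprod (pa_constr P) (vprod (pa_constr R) {[1, 0]})"
    using vprod_mem[OF lP, of "replicate (pa_dim P) 0"] vprod_mem[OF lR assms(3)] by auto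
  moreover have "replicate (pa_dim P) 0 @ b @ [0, 1] \<in> vprod {replicate (pa_dim P) 0} (vprod (pa_constr R) {[0, 1]}) \<longleftrightarrow> b \<in> pa_constr R"
    using vprod_mem[of "{replicate (pa_dim P) 0}" "pa_dim P" "replicate (pa_dim P) 0"] vprod_mem[OF lR assms(3)] by auto
  ultimately show ?thesis by simp
qed

lemma SegF:
  assumes wfP: "wf_pa P" and wfR: "wf_pa R"
  shows "w \<in> Seg (cPA P R) 0 0 \<longleftrightarrow> w \<in> pa_lang R \<and> w \<noteq> []"
proof
  have sP: "semilinear (pa_dim P) (pa_constr P)" and sR: "semilinear (pa_dim R) (pa_constr R)"
    using wfP wfR unfolding wf_pa_def by blast+
  assume "w \<in> Seg (cPA P R) 0 0"
  then obtain rs where rs: "w = map tlbl rs" "rs \<noteq> []" "path (cPA P R) 0 rs 0"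
    "\<forall>t\<in>set (butlast rs). ttgt t \<notin> {0}" "rho (pa_dim P + (pa_dim R + 2)) rs \<in> pa_constr (cPA P R)"
    unfolding Seg_def by auto
  have "hd rs \<in> cTrans P R" "tsrc (hd rs) = 0" using rs(2,3) by (cases rs; auto)+
  then have hd: "hd rs \<in> Vsteps (pa_dim P) R 0 (pa_init R) [0, 1]" by (rule cTrans_0)
  obtain rs' g where r: "path R (pa_init R) rs' g" "g \<in> pa_final R" "rs' \<noteq> []" "map tlbl rs = map tlbl rs'"
    "rho (pa_dim P + (pa_dim R + 2)) rs = replicate (pa_dim P) 0 @ rho (pa_dim R) rs' @ [0, 1]"
    using VL[OF wfR rs(3) rs(2) hd] rs(4) by auto
  have "rho (pa_dim R) rs' \<in> pa_constr R"
    using rs(5) r(5) cconstr2[OF sP sR path_rho_len[OF wfR r(1)]] by simp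
  then show "w \<in> pa_lang R \<and> w \<noteq> []" unfolding pa_lang_path using r rs(1,2)
    by auto
next
  assume "w \<in> pa_lang R \<and> w \<noteq> []"
  then obtain rs' g where r: "w = map tlbl rs'" "path R (pa_init R) rs' g" "g \<in> pa_final R"
    "rho (pa_dim R) rs' \<in> pa_constr R" "w \<noteq> []"
    unfolding pa_lang_path by blast
  have sP: "semilinear (pa_dim P) (pa_constr P)" and sR: "semilinear (pa_dim R) (pa_constr R)"
    using wfP wfR unfolding wf_pa_def by blast+
  obtain rs where rs: "path (cPA P R) 0 rs 0" "rs \<noteq> []" "\<forall>t\<in>set (butlast rs). ttgt t \<noteq> 0"
    "map tlbl rs = map tlbl rs'"
    "rho (pa_dim P + (pa_dim R + 2)) rs = replicate (pa_dim P) 0 @ rho (pa_dim R) rs' @ [0, 1]"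
    using VR[OF wfR Vsteps_sub(2) r(2) r(3)] r(1,5) by auto
  have "rho (pa_dim (cPA P R)) rs \<in> pa_constr (cPA P R)"
    using rs(5) r(4) cconstr2[OF sP sR path_rho_len[OF wfR r(2)]] by simp
  then show "w \<in> Seg (cPA P R) 0 0" unfolding Seg_def using rs r(1)
    by (intro CollectI exI[of _ rs]) auto
qed

lemma SegU:
  assumes wfP: "wf_pa P" and wfR: "wf_pa R"
  shows "w \<in> Seg (cPA P R) (eU (pa_init P)) 0 \<longleftrightarrow>
     (\<exists>u v. w = u @ v \<and> u \<in> pa_lang P \<and> v \<in> pa_lang R \<and> v \<noteq> [])"
proof
  have sP: "semilinear (pa_dim P) (pa_constr P)" and sR: "semilinear (pa_dim R) (pa_constr R)"
    using wfP wfR unfolding wf_pa_def by blast+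
  assume "w \<in> Seg (cPA P R) (eU (pa_init P)) 0"
  then obtain rs where rs: "w = map tlbl rs" "rs \<noteq> []" "path (cPA P R) (eU (pa_init P)) rs 0"
    "\<forall>t\<in>set (butlast rs). ttgt t \<notin> {0}" "rho (pa_dim P + (pa_dim R + 2)) rs \<in> pa_constr (cPA P R)"
    unfolding Seg_def by auto
  obtain us p' vs g where r: "path P (pa_init P) us p'" "p' \<in> pa_final P" "path R (pa_init R) vs g"
    "g \<in> pa_final R" "vs \<noteq> []" "map tlbl rs = map tlbl us @ map tlbl vs"
    "rho (pa_dim P + (pa_dim R + 2)) rs = rho (pa_dim P) us @ rho (pa_dim R) vs @ [1, 0]"
    using UL[OF wfP wfR rs(3) rs(2)] rs(4) by auto
  have "rho (pa_dim P) us \<in> pa_constr P \<and> rho (pa_dim R) vs \<in> pa_constr R"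
    using rs(5) r(7) cconstr1[OF sP sR path_rho_len[OF wfP r(1)] path_rho_len[OF wfR r(3)]] by simp
  then have "map tlbl us \<in> pa_lang P" "map tlbl vs \<in> pa_lang R"
    unfolding pa_lang_path using r by blast+
  moreover have "map tlbl vs \<noteq> []" using r(5) by simp
  ultimately show "\<exists>u v. w = u @ v \<and> u \<in> pa_lang P \<and> v \<in> pa_lang R \<and> v \<noteq> []"
    using rs(1) r(6) by blast
next
  have sP: "semilinear (pa_dim P) (pa_constr P)" and sR: "semilinear (pa_dim R) (pa_constr R)"
    using wfP wfR unfolding wf_pa_def by blast+
  assume "\<exists>u v. w = u @ v \<and> u \<in> pa_lang P \<and> v \<in> pa_lang R \<and> v \<noteq> []"
  then obtain u v where uv: "w = u @ v" "u \<in> pa_lang P" "v \<in> pa_lang R" "v \<noteq> []" by blast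
  obtain us p' where us: "u = map tlbl us" "path P (pa_init P) us p'" "p' \<in> pa_final P"
    "rho (pa_dim P) us \<in> pa_constr P"
    using uv(2) unfolding pa_lang_path by blast
  obtain vs g where vs: "v = map tlbl vs" "path R (pa_init R) vs g" "g \<in> pa_final R"
    "rho (pa_dim R) vs \<in> pa_constr R"
    using uv(3) unfolding pa_lang_path by blast
  have "vs \<noteq> []" using vs(1) uv(4) by auto
  then obtain rs where rs: "path (cPA P R) (eU (pa_init P)) rs 0" "rs \<noteq> []" "\<forall>t\<in>set (butlast rs). ttgt t \<noteq> 0"
     "map tlbl rs = map tlbl us @ map tlbl vs"
     "rho (pa_dim P + (pa_dim R + 2)) rs = rho (pa_dim P) us @ rho (pa_dim R) vs @ [1, 0]"
    using UR[OF wfP wfR us(3) vs(2) vs(3) _ us(2)] by blast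
  have "rho (pa_dim (cPA P R)) rs \<in> pa_constr (cPA P R)"
    using rs(5) us(4) vs(4) cconstr1[OF sP sR path_rho_len[OF wfP us(2)] path_rho_len[OF wfR vs(2)]] by simp
  then show "w \<in> Seg (cPA P R) (eU (pa_init P)) 0" unfolding Seg_def using rs uv(1) us(1) vs(1)
    by (intro CollectI exI[of _ rs]) auto
qed

lemma cPA_lang:
  assumes wfP: "wf_pa P" and wfR: "wf_pa R"
  shows "spba_lang (cPA P R) = conc_omega (pa_lang P) (omega_pow (pa_lang R))"
proof (intro set_eqI)
  fix \<alpha>
  show "\<alpha> \<in> spba_lang (cPA P R) \<longleftrightarrow> \<alpha> \<in> conc_omega (pa_lang P) (omega_pow (pa_lang R))"
    unfolding conc_omega_flat2 L1
  proof
    assume "\<exists>fs ws. fs 0 = pa_init (cPA P R) \<and> (\<forall>n. fs (Suc n) \<in> pa_final (cPA P R)) \<and>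
        (\<forall>n. ws n \<in> Seg (cPA P R) (fs n) (fs (Suc n))) \<and> is_flat ws \<alpha>"
    then obtain fs ws where a: "fs 0 = eU (pa_init P)" "\<forall>n. fs (Suc n) = 0"
        "\<forall>n. ws n \<in> Seg (cPA P R) (fs n) (fs (Suc n))" "is_flat ws \<alpha>" by auto
    have "ws 0 \<in> Seg (cPA P R) (eU (pa_init P)) 0" using a by metis
    then obtain u v where uv: "ws 0 = u @ v" "u \<in> pa_lang P" "v \<in> pa_lang R" "v \<noteq> []"
      unfolding SegU[OF wfP wfR] by blast
    have "ws (Suc n) \<in> pa_lang R \<and> ws (Suc n) \<noteq> []" for n
      using a(2,3) SegF[OF wfP wfR] by metis
    then show "\<exists>ws u v. ws 0 = u @ v \<and> u \<in> pa_lang P \<and> v \<in> pa_lang R \<and> v \<noteq> [] \<and>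
       (\<forall>n. ws (Suc n) \<in> pa_lang R \<and> ws (Suc n) \<noteq> []) \<and> is_flat ws \<alpha>"
      using uv a(4) by blast
  next
    assume "\<exists>ws u v. ws 0 = u @ v \<and> u \<in> pa_lang P \<and> v \<in> pa_lang R \<and> v \<noteq> [] \<and>
       (\<forall>n. ws (Suc n) \<in> pa_lang R \<and> ws (Suc n) \<noteq> []) \<and> is_flat ws \<alpha>"
    then obtain ws u v where a: "ws 0 = u @ v" "u \<in> pa_lang P" "v \<in> pa_lang R" "v \<noteq> []"
       "\<forall>n. ws (Suc n) \<in> pa_lang R \<and> ws (Suc n) \<noteq> []" "is_flat ws \<alpha>" by blast
    define fs where "fs = case_nat (eU (pa_init P)) (\<lambda>_. 0::nat)"
    have "ws n \<in> Seg (cPA P R) (fs n) (fs (Suc n))" for n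
    proof (cases n)
      case 0 then show ?thesis unfolding fs_def using SegU[OF wfP wfR] a by simp blast
    next
      case (Suc m) then show ?thesis unfolding fs_def using SegF[OF wfP wfR] a(5) by simp
    qed
    then show "\<exists>fs ws. fs 0 = pa_init (cPA P R) \<and> (\<forall>n. fs (Suc n) \<in> pa_final (cPA P R)) \<and>
        (\<forall>n. ws n \<in> Seg (cPA P R) (fs n) (fs (Suc n))) \<and> is_flat ws \<alpha>"
      using a(6) by (intro exI[of _ fs] exI[of _ ws]) (auto simp: fs_def)
  qed
qed



lemma Vsteps_E:
  assumes "t \<in> Vsteps d R src p fl"
  obtains a y q z where "t = (src, a, replicate d 0 @ y @ fl, z)" "(p, a, y, q) \<in> pa_trans R" "z \<in> tgtV R q"
  using assms unfolding Vsteps_def by auto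

lemma Usteps_E:
  assumes "t \<in> Usteps e P"
  obtains p a x q where "t = (eU p, a, x @ replicate e 0 @ [0, 0], eU q)" "(p, a, x, q) \<in> pa_trans P"
  using assms unfolding Usteps_def by auto

definition cSts :: "'a pa \<Rightarrow> 'a pa \<Rightarrow> nat set" where
  "cSts P R = insert 0 (eU ` pa_states P \<union> eV ` pa_states R)"

definition cVecs :: "'a pa \<Rightarrow> 'a pa \<Rightarrow> nat list set" where
  "cVecs P R = (\<lambda>x. x @ replicate (pa_dim R) 0 @ [0, 0]) ` (tvec ` pa_trans P) \<union>
     (\<lambda>(y, fl). replicate (pa_dim P) 0 @ y @ fl) ` (tvec ` pa_trans R \<times> {[0, 0], [1, 0], [0, 1]})"

lemma Vsteps_wf:
  assumes wfR: "wf_pa R" and t: "t \<in> Vsteps (pa_dim P) R src p fl" and fl: "fl \<in> {[0, 0], [1, 0], [0, 1]}"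
  shows "ttgt t \<in> cSts P R \<and> tvec t \<in> cVecs P R \<and> length (tvec t) = pa_dim P + (pa_dim R + 2) \<and> p \<in> pa_states R"
proof -
  obtain a y q z where h: "t = (src, a, replicate (pa_dim P) 0 @ y @ fl, z)" "(p, a, y, q) \<in> pa_trans R" "z \<in> tgtV R q"
    using t by (rule Vsteps_E)
  have "z \<in> cSts P R"
  proof (cases "z = 0")
    case True then show ?thesis by (simp add: cSts_def)
  next
    case False
    then have "z = eV q" using tgtV_ne0[OF h(3)] by blast
    then show ?thesis using wf_tgt[OF wfR h(2)] by (simp add: cSts_def)
  qed
  moreover have "tvec t \<in> cVecs P R"
  proof -
    have "(y, fl) \<in> tvec ` pa_trans R \<times> {[0, 0], [1, 0], [0, 1]}"
      using h(2) fl by (force simp: image_iff)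
    then show ?thesis unfolding cVecs_def using h(1) by (intro UnI2) (rule image_eqI[where x="(y, fl)"]; simp)
  qed
  moreover have "length (tvec t) = pa_dim P + (pa_dim R + 2)"
    using h(1) wf_len[OF wfR h(2)] fl by auto
  ultimately show ?thesis using h wf_src[OF wfR h(2)] by simp
qed

lemma cTrans_wf:
  assumes wfP: "wf_pa P" and wfR: "wf_pa R" and t: "t \<in> cTrans P R"
  shows "tsrc t \<in> cSts P R \<and> ttgt t \<in> cSts P R \<and> tvec t \<in> cVecs P R \<and> length (tvec t) = pa_dim P + (pa_dim R + 2)"
  using t
proof (cases rule: cTrans_cases)
  case U
  then obtain p a x q where h: "t = (eU p, a, x @ replicate (pa_dim R) 0 @ [0, 0], eU q)" "(p, a, x, q) \<in> pa_trans P"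
    by (rule Usteps_E)
  have "tvec t \<in> cVecs P R" unfolding cVecs_def using h
    by (intro UnI1) (rule image_eqI[where x=x]; force simp: image_iff)
  then show ?thesis using h wf_src[OF wfP h(2)] wf_tgt[OF wfP h(2)] wf_len[OF wfP h(2)]
    by (simp add: cSts_def)
next
  case (V x)
  then show ?thesis using Vsteps_wf[OF wfR V(1)] by (simp add: cSts_def)
next
  case (J x)
  have "x \<in> pa_states P" using J(1) wfP unfolding wf_pa_def by blast
  then show ?thesis using Vsteps_wf[OF wfR J(2)] J(3) by (simp add: cSts_def)
next
  case F
  then show ?thesis using Vsteps_wf[OF wfR F(1)] by (simp add: cSts_def)
qed

lemma cPA_wf:
  assumes wfP: "wf_pa P" and wfR: "wf_pa R"
  shows "wf_pa (cPA P R :: ('a::finite) pa)"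
proof -
  have finS: "finite (cSts P R)" using wfP wfR unfolding cSts_def wf_pa_def by simp
  have finV: "finite (cVecs P R)" using wfP wfR unfolding cVecs_def wf_pa_def by simp
  have "cTrans P R \<subseteq> cSts P R \<times> UNIV \<times> cVecs P R \<times> cSts P R"
  proof
    fix t assume "t \<in> cTrans P R"
    then show "t \<in> cSts P R \<times> UNIV \<times> cVecs P R \<times> cSts P R"
      using cTrans_wf[OF wfP wfR] trans_split[of t] by (metis SigmaI UNIV_I)
  qed
  moreover have "finite (cSts P R \<times> (UNIV :: 'a set) \<times> cVecs P R \<times> cSts P R)"
    using finS finV by simp
  ultimately have finT: "finite (cTrans P R :: 'a ptrans set)" by (rule finite_subset)
  have tr: "p \<in> cSts P R \<and> q \<in> cSts P R \<and> length v = pa_dim P + (pa_dim R + 2)"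
    if "(p, a, v, q) \<in> cTrans P R" for p a v q
    using cTrans_wf[OF wfP wfR that] by simp
  have sP: "semilinear (pa_dim P) (pa_constr P)" and sR: "semilinear (pa_dim R) (pa_constr R)"
    using wfP wfR unfolding wf_pa_def by blast+
  have s1: "semilinear (pa_dim P + (pa_dim R + 2)) (vprod (pa_constr P) (vprod (pa_constr R) {[1, 0]}))"
    using semilinear_prod[OF sP semilinear_prod[OF sR semilinear_single[of "[1, 0]"]]] by simp
  have s2: "semilinear (pa_dim P + (pa_dim R + 2)) (vprod {replicate (pa_dim P) 0} (vprod (pa_constr R) {[0, 1]}))"
    using semilinear_prod[OF semilinear_single[of "replicate (pa_dim P) 0"] semilinear_prod[OF sR semilinear_single[of "[0, 1]"]]]
    by simp
  have i: "pa_init P \<in> pa_states P" using wfP unfolding wf_pa_def by blast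
  have tr': "\<forall>(p, a, v, q) \<in> pa_trans (cPA P R). p \<in> pa_states (cPA P R) \<and> q \<in> pa_states (cPA P R) \<and>
      length v = pa_dim (cPA P R)"
  proof
    fix x assume "x \<in> pa_trans (cPA P R)"
    then obtain p a v q where x: "x = (p, a, v, q)" "(p, a, v, q) \<in> cTrans P R" by (cases x) auto
    have "pa_states (cPA P R) = cSts P R" by (simp add: cSts_def)
    then show "case x of (p, a, v, q) \<Rightarrow> p \<in> pa_states (cPA P R) \<and> q \<in> pa_states (cPA P R) \<and>
      length v = pa_dim (cPA P R)" using tr[OF x(2)] x(1) by simp
  qed
  have "finite (pa_states (cPA P R))" using finS by (simp add: cSts_def)
  moreover have "pa_init (cPA P R) \<in> pa_states (cPA P R)" using i by simp
  moreover have "pa_final (cPA P R) \<subseteq> pa_states (cPA P R)" by simp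
  moreover have "finite (pa_trans (cPA P R))" using finT by simp
  moreover have "semilinear (pa_dim (cPA P R)) (pa_constr (cPA P R))" using semilinear_Un[OF s1 s2] by simp
  ultimately show ?thesis unfolding wf_pa_def using tr' by blast
qed

lemma cPA_edge_E:
  assumes "(y, z) \<in> pa_edges (cPA P R)"
  obtains t where "t \<in> cTrans P R" "tsrc t = y" "ttgt t = z"
  using assms unfolding pa_edges_def by (auto intro: that[of "(y, _, _, z)"])

lemma Vsteps_tgt:
  assumes "t \<in> Vsteps d R src p fl"
  shows "\<exists>q. ttgt t \<in> tgtV R q"
proof -
  obtain a y q z where "t = (src, a, replicate d 0 @ y @ fl, z)" "(p, a, y, q) \<in> pa_trans R" "z \<in> tgtV R q"
    using assms by (rule Vsteps_E)
  then show ?thesis by auto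
qed

lemma cTrans_tgt_cases:
  assumes "t \<in> cTrans P R"
  shows "(\<exists>p p'. tsrc t = eU p' \<and> ttgt t = eU p) \<or> (\<exists>q. ttgt t \<in> tgtV R q)"
  using assms
proof (cases rule: cTrans_cases)
  case U then show ?thesis by (auto elim: Usteps_E)
next
  case (V x) then show ?thesis using Vsteps_tgt by blast
next
  case (J x) then show ?thesis using Vsteps_tgt by blast
next
  case F then show ?thesis using Vsteps_tgt by blast
qed

lemma cTrans_tgt_eU:
  assumes "t \<in> cTrans P R" "ttgt t = eU p"
  shows "\<exists>p'. tsrc t = eU p'"
proof -
  have "\<not> (\<exists>q. ttgt t \<in> tgtV R q)"
  proof
    assume "\<exists>q. ttgt t \<in> tgtV R q"
    then obtain q where "ttgt t \<in> tgtV R q" by blast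
    then show False using tgtV_ne0[of "ttgt t" R q] assms(2) by auto
  qed
  then show ?thesis using cTrans_tgt_cases[OF assms(1)] by blast
qed

lemma cTrans_tgt_eV:
  assumes "t \<in> cTrans P R" "ttgt t = eV p"
  shows "useful R p"
proof -
  have "\<exists>q. ttgt t \<in> tgtV R q" using cTrans_tgt_cases[OF assms(1)] assms(2) by auto
  then obtain q where "ttgt t \<in> tgtV R q" by blast
  then show ?thesis using tgtV_ne0[of "ttgt t" R q] assms(2) by auto
qed

lemma reach0_notU: "(0, u) \<in> (pa_edges (cPA P R))\<^sup>* \<Longrightarrow> u \<noteq> eU p"
proof (induction arbitrary: p rule: rtrancl_induct)
  case base then show ?case by simp
next
  case (step y z)
  show ?case
  proof
    assume "z = eU p"
    obtain t where "t \<in> cTrans P R" "tsrc t = y" "ttgt t = z" using step(2) by (rule cPA_edge_E)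
    then obtain p' where "y = eU p'" using cTrans_tgt_eU \<open>z = eU p\<close> by metis
    then show False using step(3) by blast
  qed
qed

lemma cTrans_edge: "t \<in> cTrans P R \<Longrightarrow> (tsrc t, ttgt t) \<in> pa_edges (cPA P R)"
  unfolding pa_edges_def using trans_split[of t] by auto metis

lemma useful_reach:
  assumes "useful R q"
  shows "(eV q, 0) \<in> (pa_edges (cPA P R))\<^sup>*"
proof -
  obtain g where g: "g \<in> pa_final R" "(q, g) \<in> (pa_edges R)\<^sup>+" using assms unfolding useful_def by blast
  from g(2) show ?thesis
  proof (induction rule: converse_trancl_induct)
    case (base y)
    then obtain a v where "(y, a, v, g) \<in> pa_trans R" unfolding pa_edges_def by auto
    then have "(eV y, a, replicate (pa_dim P) 0 @ v @ [0, 0], 0) \<in> Vsteps (pa_dim P) R (eV y) y [0, 0]"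
      unfolding Vsteps_def using g(1) tgtV_0 by blast
    then have "(eV y, a, replicate (pa_dim P) 0 @ v @ [0, 0], 0) \<in> cTrans P R" using Vsteps_sub(1) by blast
    from cTrans_edge[OF this] show ?case by simp
  next
    case (step y z)
    then obtain a v where "(y, a, v, z) \<in> pa_trans R" unfolding pa_edges_def by auto
    moreover have "useful R z" unfolding useful_def using step(2) g(1) by blast
    ultimately have "(eV y, a, replicate (pa_dim P) 0 @ v @ [0, 0], eV z) \<in> Vsteps (pa_dim P) R (eV y) y [0, 0]"
      unfolding Vsteps_def using tgtV_eV by blast
    then have "(eV y, a, replicate (pa_dim P) 0 @ v @ [0, 0], eV z) \<in> cTrans P R" using Vsteps_sub(1) by blast
    from cTrans_edge[OF this] have "(eV y, eV z) \<in> pa_edges (cPA P R)" by simp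
    then show ?case using step(3) by (meson converse_rtrancl_into_rtrancl)
  qed
qed

lemma cPA_leaves:
  assumes wfP: "wf_pa P" and wfR: "wf_pa R"
  shows "final_only_in_leaves (cPA P R)"
proof -
  let ?B = "cPA P R"
  let ?S = "scc_of ?B 0"
  have z: "0 \<in> pa_states ?B" by simp
  have "is_leaf_scc ?B ?S"
    unfolding is_leaf_scc_def
  proof
    show "?S \<in> sccs ?B" unfolding sccs_def using z by blast
    show "\<not> (\<exists>u\<in>?S. \<exists>v. (u, v) \<in> pa_edges ?B \<and> v \<notin> ?S)"
    proof
      assume "\<exists>u\<in>?S. \<exists>v. (u, v) \<in> pa_edges ?B \<and> v \<notin> ?S"
      then obtain u v where uv: "u \<in> ?S" "(u, v) \<in> pa_edges ?B" "v \<notin> ?S" by blast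
      obtain t where t: "t \<in> cTrans P R" "tsrc t = u" "ttgt t = v" using uv(2) by (rule cPA_edge_E)
      have r0u: "(0, u) \<in> (pa_edges ?B)\<^sup>*" using uv(1) unfolding scc_of_def by blast
      then have r0v: "(0, v) \<in> (pa_edges ?B)\<^sup>*" using uv(2) by (meson rtrancl_into_rtrancl)
      have vS: "v \<in> pa_states ?B" using cTrans_wf[OF wfP wfR t(1)] t(3) by (simp add: cSts_def)
      have "(v, 0) \<in> (pa_edges ?B)\<^sup>*"
      proof (cases "v = 0")
        case True then show ?thesis by simp
      next
        case False
        then obtain q where "v = eU q \<or> v = eV q" using vS by auto
        moreover have "v \<noteq> eU q" using reach0_notU[OF r0v] .
        ultimately have "v = eV q" by blast
        then have "useful R q" using cTrans_tgt_eV[OF t(1)] t(3) by blast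
        then show ?thesis using useful_reach \<open>v = eV q\<close> by metis
      qed
      then have "v \<in> ?S" unfolding scc_of_def using vS r0v by blast
      then show False using uv(3) by blast
    qed
  qed
  moreover have "0 \<in> ?S" unfolding scc_of_def using z by blast
  moreover have "card (S \<inter> pa_final ?B) \<le> 1" for S
  proof -
    have "S \<inter> pa_final ?B \<subseteq> {0}" by simp
    then have "card (S \<inter> pa_final ?B) \<le> card {0::nat}" by (intro card_mono) auto
    then show ?thesis by simp
  qed
  ultimately show ?thesis unfolding final_only_in_leaves_def by auto
qed



section \<open>Union of two SPBAs\<close>

definition sel :: "'a pa \<Rightarrow> 'a pa \<Rightarrow> nat \<Rightarrow> 'a pa" where
  "sel A B i = (if i = 0 then A else B)"

definition enc :: "nat \<Rightarrow> nat \<Rightarrow> nat" where "enc i q = 2 * q + 1 + i"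

lemma enc_inj[simp]: "i < 2 \<Longrightarrow> j < 2 \<Longrightarrow> enc i p = enc j q \<longleftrightarrow> i = j \<and> p = q"
  unfolding enc_def by presburger

lemma enc_ne0[simp]: "enc i p \<noteq> 0" "0 \<noteq> enc i p" "0 < enc i p"
  unfolding enc_def by simp_all

definition pad :: "nat \<Rightarrow> nat \<Rightarrow> nat \<Rightarrow> nat list \<Rightarrow> nat \<Rightarrow> nat list" where
  "pad a b i v n = (if i = 0 then v @ replicate b 0 @ [n, 0] else replicate a 0 @ v @ [0, n])"

definition liftT :: "nat \<Rightarrow> nat \<Rightarrow> nat \<Rightarrow> 'a ptrans \<Rightarrow> 'a ptrans" where
  "liftT a b i t = (enc i (tsrc t), tlbl t, pad a b i (tvec t) 1, enc i (ttgt t))"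

definition startT :: "nat \<Rightarrow> nat \<Rightarrow> nat \<Rightarrow> 'a ptrans \<Rightarrow> 'a ptrans" where
  "startT a b i t = (0, tlbl t, pad a b i (tvec t) 1, enc i (ttgt t))"

definition uTrans :: "'a pa \<Rightarrow> 'a pa \<Rightarrow> 'a ptrans set" where
  "uTrans A B = (\<Union>i\<in>{..<2}. liftT (pa_dim A) (pa_dim B) i ` pa_trans (sel A B i) \<union>
      startT (pa_dim A) (pa_dim B) i ` {t \<in> pa_trans (sel A B i). tsrc t = pa_init (sel A B i)})"

definition pos1 :: "nat list set" where "pos1 = {[k, 0] | k. k \<ge> 1}"
definition pos2 :: "nat list set" where "pos2 = {[0, k] | k. k \<ge> 1}"

definition UNstates :: "'a pa \<Rightarrow> 'a pa \<Rightarrow> nat set" where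
  "UNstates A B = insert 0 (\<Union>i\<in>{..<2}. enc i ` pa_states (sel A B i))"
definition UNfinal :: "'a pa \<Rightarrow> 'a pa \<Rightarrow> nat set" where
  "UNfinal A B = (\<Union>i\<in>{..<2}. enc i ` pa_final (sel A B i))"

definition UNI :: "'a pa \<Rightarrow> 'a pa \<Rightarrow> 'a pa" where
  "UNI A B = \<lparr>pa_dim = pa_dim A + (pa_dim B + 2),
     pa_states = UNstates A B,
     pa_init = 0, pa_trans = uTrans A B,
     pa_final = UNfinal A B,
     pa_constr = vprod (pa_constr A) (vprod {replicate (pa_dim B) 0} pos1) \<union>
                 vprod {replicate (pa_dim A) 0} (vprod (pa_constr B) pos2)\<rparr>"

lemma UN_sel[simp]:
  "pa_dim (UNI A B) = pa_dim A + (pa_dim B + 2)"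
  "pa_states (UNI A B) = insert 0 (\<Union>i\<in>{..<2}. enc i ` pa_states (sel A B i))"
  "pa_init (UNI A B) = 0" "pa_trans (UNI A B) = uTrans A B"
  "pa_final (UNI A B) = (\<Union>i\<in>{..<2}. enc i ` pa_final (sel A B i))"
  "pa_constr (UNI A B) = vprod (pa_constr A) (vprod {replicate (pa_dim B) 0} pos1) \<union>
                 vprod {replicate (pa_dim A) 0} (vprod (pa_constr B) pos2)"
  by (simp_all add: UNI_def UNstates_def UNfinal_def)

lemma liftT_simps[simp]: "tsrc (liftT a b i t) = enc i (tsrc t)" "ttgt (liftT a b i t) = enc i (ttgt t)"
  "tlbl (liftT a b i t) = tlbl t" "tvec (liftT a b i t) = pad a b i (tvec t) 1"
  by (simp_all add: liftT_def)

lemma startT_simps[simp]: "tsrc (startT a b i t) = 0" "ttgt (startT a b i t) = enc i (ttgt t)"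
  "tlbl (startT a b i t) = tlbl t" "tvec (startT a b i t) = pad a b i (tvec t) 1"
  by (simp_all add: startT_def)

lemma two_cases: "i < (2::nat) \<Longrightarrow> i = 0 \<or> i = 1" by auto

lemma final_UN: "i < 2 \<Longrightarrow> enc i q \<in> pa_final (UNI A B) \<longleftrightarrow> q \<in> pa_final (sel A B i)"
proof -
  assume i: "i < 2"
  have "enc i q \<in> (\<Union>j\<in>{..<2}. enc j ` pa_final (sel A B j)) \<longleftrightarrow> (\<exists>j\<in>{..<2}. \<exists>q'\<in>pa_final (sel A B j). enc i q = enc j q')"
    by blast
  also have "\<dots> \<longleftrightarrow> q \<in> pa_final (sel A B i)" using i by auto
  finally show ?thesis by simp
qed

lemma states_UN: "i < 2 \<Longrightarrow> enc i q \<in> pa_states (UNI A B) \<longleftrightarrow> q \<in> pa_states (sel A B i)"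
proof -
  assume i: "i < 2"
  have "enc i q \<in> insert 0 (\<Union>j\<in>{..<2}. enc j ` pa_states (sel A B j)) \<longleftrightarrow>
      (\<exists>j\<in>{..<2}. \<exists>q'\<in>pa_states (sel A B j). enc i q = enc j q')"
    by auto
  also have "\<dots> \<longleftrightarrow> q \<in> pa_states (sel A B i)" using i by auto
  finally show ?thesis by simp
qed

lemma uTrans_cases:
  assumes "t \<in> uTrans A B"
  obtains (L) i t' where "i < 2" "t' \<in> pa_trans (sel A B i)" "t = liftT (pa_dim A) (pa_dim B) i t'"
  | (S) i t' where "i < 2" "t' \<in> pa_trans (sel A B i)" "tsrc t' = pa_init (sel A B i)"
       "t = startT (pa_dim A) (pa_dim B) i t'"
  using assms unfolding uTrans_def by auto

lemma liftT_in: "i < 2 \<Longrightarrow> t' \<in> pa_trans (sel A B i) \<Longrightarrow> liftT (pa_dim A) (pa_dim B) i t' \<in> uTrans A B"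
  unfolding uTrans_def using two_cases by blast

lemma startT_in: "i < 2 \<Longrightarrow> t' \<in> pa_trans (sel A B i) \<Longrightarrow> tsrc t' = pa_init (sel A B i) \<Longrightarrow>
    startT (pa_dim A) (pa_dim B) i t' \<in> uTrans A B"
  unfolding uTrans_def using two_cases by blast

lemma uTrans_from_enc:
  assumes "t \<in> uTrans A B" "tsrc t = enc i p" "i < 2"
  shows "\<exists>t'. t' \<in> pa_trans (sel A B i) \<and> tsrc t' = p \<and> t = liftT (pa_dim A) (pa_dim B) i t'"
  using assms(1)
proof (cases rule: uTrans_cases)
  case (L j t')
  then have "enc j (tsrc t') = enc i p" using assms(2) by simp
  then have "j = i" "tsrc t' = p" using L(1) assms(3) by auto
  then show ?thesis using L by blast
next
  case (S j t')
  then show ?thesis using assms by auto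
qed

lemma uTrans_from_0:
  assumes "t \<in> uTrans A B" "tsrc t = 0"
  shows "\<exists>i t'. i < 2 \<and> t' \<in> pa_trans (sel A B i) \<and> tsrc t' = pa_init (sel A B i) \<and> t = startT (pa_dim A) (pa_dim B) i t'"
  using assms(1)
proof (cases rule: uTrans_cases)
  case (L j t')
  then show ?thesis using assms by auto
next
  case (S j t')
  then show ?thesis by blast
qed

lemma unlift:
  assumes "i < 2"
  shows "path (UNI A B) (enc i p) rs y \<Longrightarrow>
    \<exists>rs' q. y = enc i q \<and> rs = map (liftT (pa_dim A) (pa_dim B) i) rs' \<and> path (sel A B i) p rs' q"
proof (induction rs arbitrary: p)
  case Nil then show ?case by simp
next
  case (Cons t ts)
  then have "t \<in> uTrans A B" "tsrc t = enc i p" "path (UNI A B) (ttgt t) ts y" by auto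
  then obtain t' where t': "t' \<in> pa_trans (sel A B i)" "tsrc t' = p" "t = liftT (pa_dim A) (pa_dim B) i t'"
    using uTrans_from_enc assms by blast
  then have "path (UNI A B) (enc i (ttgt t')) ts y" using \<open>path (UNI A B) (ttgt t) ts y\<close> by simp
  then obtain rs' q where "y = enc i q" "ts = map (liftT (pa_dim A) (pa_dim B) i) rs'" "path (sel A B i) (ttgt t') rs' q"
    using Cons.IH by blast
  then show ?case using t' by (intro exI[of _ "t' # rs'"] exI[of _ q]) auto
qed

lemma lift:
  assumes "i < 2"
  shows "path (sel A B i) p rs' q \<Longrightarrow> path (UNI A B) (enc i p) (map (liftT (pa_dim A) (pa_dim B) i) rs') (enc i q)"
proof (induction rs' arbitrary: p)
  case Nil then show ?case by simp
next
  case (Cons t ts)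
  then have "t \<in> pa_trans (sel A B i)" "tsrc t = p" "path (sel A B i) (ttgt t) ts q" by auto
  then show ?case using liftT_in[OF assms, of t A B] Cons.IH by simp
qed

lemma replicate_blocks: "replicate (a + (b + 2)) (0::nat) = replicate a 0 @ replicate b 0 @ [0, 0]"
  by (simp only: replicate_add) (simp add: numeral_2_eq_2)

lemma rho_lift:
  assumes "i < 2" "wf_pa (sel A B i)" "path (sel A B i) p rs q"
  shows "rho (pa_dim A + (pa_dim B + 2)) (map (liftT (pa_dim A) (pa_dim B) i) rs)
    = pad (pa_dim A) (pa_dim B) i (rho (pa_dim (sel A B i)) rs) (length rs)"
  using assms(3)
proof (induction rs arbitrary: p)
  case Nil
  have "rho (pa_dim A + (pa_dim B + 2)) [] = replicate (pa_dim A) 0 @ replicate (pa_dim B) 0 @ [0, 0]"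
    by (simp only: rho_Nil replicate_blocks)
  then show ?case using assms(1) by (cases "i = 0") (auto simp: pad_def sel_def)
next
  case (Cons t ts)
  have lt: "length (tvec t) = pa_dim (sel A B i)"
    using Cons.prems wf_len[OF assms(2), of "tsrc t" "tlbl t" "tvec t" "ttgt t"] trans_split[of t] by auto
  have lr: "length (rho (pa_dim (sel A B i)) ts) = pa_dim (sel A B i)"
    using path_rho_len[OF assms(2)] Cons.prems by auto
  have IH: "rho (pa_dim A + (pa_dim B + 2)) (map (liftT (pa_dim A) (pa_dim B) i) ts)
    = pad (pa_dim A) (pa_dim B) i (rho (pa_dim (sel A B i)) ts) (length ts)"
    using Cons.IH Cons.prems by auto
  show ?case using assms(1) lt lr IH by (auto simp: pad_def vadd_blocks sel_def)
qed

lemma con_UN: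
  assumes "i < 2" "semilinear (pa_dim A) (pa_constr A)" "semilinear (pa_dim B) (pa_constr B)"
    "length v = pa_dim (sel A B i)" "n \<ge> 1"
  shows "pad (pa_dim A) (pa_dim B) i v n \<in> pa_constr (UNI A B) \<longleftrightarrow> v \<in> pa_constr (sel A B i)"
proof -
  have lA: "\<forall>x\<in>pa_constr A. length x = pa_dim A" using semilinear_length[OF assms(2)] by blast
  have lB: "\<forall>x\<in>pa_constr B. length x = pa_dim B" using semilinear_length[OF assms(3)] by blast
  have l0: "\<forall>x\<in>{replicate m (0::nat)}. length x = m" for m by simp
  show ?thesis
  proof (cases "i = 0")
    case True
    then have lv: "length v = pa_dim A" using assms(4) by (simp add: sel_def)
    have "v @ replicate (pa_dim B) 0 @ [n, 0] \<notin> vprod {replicate (pa_dim A) 0} (vprod (pa_constr B) pos2)"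
      using vprod_mem[OF l0 lv] vprod_mem[OF lB, of "replicate (pa_dim B) 0"] assms(5) by (auto simp: pos1_def pos2_def)
    moreover have "v @ replicate (pa_dim B) 0 @ [n, 0] \<in> vprod (pa_constr A) (vprod {replicate (pa_dim B) 0} pos1)
       \<longleftrightarrow> v \<in> pa_constr A"
      using vprod_mem[OF lA lv] vprod_mem[OF l0, of "replicate (pa_dim B) 0"] assms(5) by (auto simp: pos1_def pos2_def)
    ultimately show ?thesis using True by (simp add: pad_def sel_def)
  next
    case False
    then have lv: "length v = pa_dim B" using assms(4) by (simp add: sel_def)
    have "replicate (pa_dim A) 0 @ v @ [0, n] \<notin> vprod (pa_constr A) (vprod {replicate (pa_dim B) 0} pos1)"
      using vprod_mem[OF lA, of "replicate (pa_dim A) 0"] vprod_mem[OF l0 lv] assms(5) by (auto simp: pos1_def pos2_def)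
    moreover have "replicate (pa_dim A) 0 @ v @ [0, n] \<in> vprod {replicate (pa_dim A) 0} (vprod (pa_constr B) pos2)
       \<longleftrightarrow> v \<in> pa_constr B"
      using vprod_mem[OF l0, of "replicate (pa_dim A) 0"] vprod_mem[OF lB lv] assms(5) by (auto simp: pos1_def pos2_def)
    ultimately show ?thesis using False by (simp add: pad_def sel_def)
  qed
qed



declare UN_sel(5)[simp del]

lemma sel_wf: "wf_pa A \<Longrightarrow> wf_pa B \<Longrightarrow> wf_pa (sel A B i)"
  by (simp add: sel_def)

lemma butlast_ttgt: "(\<forall>t\<in>set (butlast xs). ttgt t \<notin> F) \<longleftrightarrow> (\<forall>y\<in>set (butlast (map ttgt xs)). y \<notin> F)"
  by (simp add: map_butlast[symmetric])

lemma seg_transfer: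
  assumes i: "i < 2" and wfA: "wf_pa A" and wfB: "wf_pa B"
    and p: "path (sel A B i) p rs' q"
    and l: "map tlbl rs = map tlbl rs'" and v: "map tvec rs = map tvec (map (liftT (pa_dim A) (pa_dim B) i) rs')"
    and g: "map ttgt rs = map (enc i \<circ> ttgt) rs'"
  shows "(rs' \<noteq> [] \<and> (\<forall>t\<in>set (butlast rs'). ttgt t \<notin> pa_final (sel A B i)) \<and>
            rho (pa_dim (sel A B i)) rs' \<in> pa_constr (sel A B i)) \<longleftrightarrow>
         (rs \<noteq> [] \<and> (\<forall>t\<in>set (butlast rs). ttgt t \<notin> pa_final (UNI A B)) \<and>
            rho (pa_dim (UNI A B)) rs \<in> pa_constr (UNI A B))"
proof -
  have len: "length rs = length rs'" using l by (metis length_map)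
  have sA: "semilinear (pa_dim A) (pa_constr A)" and sB: "semilinear (pa_dim B) (pa_constr B)"
    using wfA wfB unfolding wf_pa_def by blast+
  have m: "(\<forall>t\<in>set (butlast rs). ttgt t \<notin> pa_final (UNI A B)) \<longleftrightarrow>
           (\<forall>t\<in>set (butlast rs'). ttgt t \<notin> pa_final (sel A B i))"
  proof -
    have "(\<forall>t\<in>set (butlast rs). ttgt t \<notin> pa_final (UNI A B)) \<longleftrightarrow>
          (\<forall>y\<in>set (butlast (map (enc i) (map ttgt rs'))). y \<notin> pa_final (UNI A B))"
      unfolding butlast_ttgt g by simp
    also have "\<dots> \<longleftrightarrow> (\<forall>y\<in>set (butlast (map ttgt rs')). enc i y \<notin> pa_final (UNI A B))"
      by (simp add: map_butlast[symmetric])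
    also have "\<dots> \<longleftrightarrow> (\<forall>y\<in>set (butlast (map ttgt rs')). y \<notin> pa_final (sel A B i))"
      using final_UN[OF i, of _ A B] by simp
    finally show ?thesis unfolding butlast_ttgt .
  qed
  have r: "rho (pa_dim (UNI A B)) rs = pad (pa_dim A) (pa_dim B) i (rho (pa_dim (sel A B i)) rs') (length rs')"
    using rho_cong[OF v] rho_lift[OF i sel_wf[OF wfA wfB] p] by simp
  have hC: "rs' \<noteq> [] \<Longrightarrow> rho (pa_dim (UNI A B)) rs \<in> pa_constr (UNI A B) \<longleftrightarrow> rho (pa_dim (sel A B i)) rs' \<in> pa_constr (sel A B i)"
    unfolding r by (rule con_UN[OF i sA sB path_rho_len[OF sel_wf[OF wfA wfB] p]]) (simp add: Suc_leI)
  show ?thesis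
  proof (cases "rs' = []")
    case True then show ?thesis using len by simp
  next
    case False
    then have "rs \<noteq> []" using len by auto
    then show ?thesis using m hC[OF False] False by blast
  qed
qed

lemma SegE:
  assumes i: "i < 2" and wfA: "wf_pa A" and wfB: "wf_pa B"
  shows "Seg (UNI A B) (enc i p) (enc i q) = Seg (sel A B i) p q"
proof (intro set_eqI iffI)
  fix w assume "w \<in> Seg (UNI A B) (enc i p) (enc i q)"
  then obtain rs where rs: "w = map tlbl rs" "path (UNI A B) (enc i p) rs (enc i q)"
    "rs \<noteq> [] \<and> (\<forall>t\<in>set (butlast rs). ttgt t \<notin> pa_final (UNI A B)) \<and> rho (pa_dim (UNI A B)) rs \<in> pa_constr (UNI A B)"
    unfolding Seg_def by blast
  obtain rs' q' where r: "enc i q = enc i q'" "rs = map (liftT (pa_dim A) (pa_dim B) i) rs'" "path (sel A B i) p rs' q'"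
    using unlift[OF i rs(2)] by blast
  have "q' = q" using r(1) i by simp
  have "rs' \<noteq> [] \<and> (\<forall>t\<in>set (butlast rs'). ttgt t \<notin> pa_final (sel A B i)) \<and>
            rho (pa_dim (sel A B i)) rs' \<in> pa_constr (sel A B i)"
    using seg_transfer[OF i wfA wfB r(3), of rs] rs(3) r(2) by simp
  then show "w \<in> Seg (sel A B i) p q" unfolding Seg_def using r(2,3) rs(1) \<open>q' = q\<close>
    by (intro CollectI exI[of _ rs']) simp
next
  fix w assume "w \<in> Seg (sel A B i) p q"
  then obtain rs' where rs': "w = map tlbl rs'" "path (sel A B i) p rs' q"
    "rs' \<noteq> [] \<and> (\<forall>t\<in>set (butlast rs'). ttgt t \<notin> pa_final (sel A B i)) \<and>
            rho (pa_dim (sel A B i)) rs' \<in> pa_constr (sel A B i)"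
    unfolding Seg_def by blast
  define rs where "rs = map (liftT (pa_dim A) (pa_dim B) i) rs'"
  have "path (UNI A B) (enc i p) rs (enc i q)" unfolding rs_def by (rule lift[OF i rs'(2)])
  moreover have "rs \<noteq> [] \<and> (\<forall>t\<in>set (butlast rs). ttgt t \<notin> pa_final (UNI A B)) \<and> rho (pa_dim (UNI A B)) rs \<in> pa_constr (UNI A B)"
    using seg_transfer[OF i wfA wfB rs'(2), of rs] rs'(3) by (simp add: rs_def)
  ultimately show "w \<in> Seg (UNI A B) (enc i p) (enc i q)" unfolding Seg_def using rs'(1)
    by (intro CollectI exI[of _ rs]) (simp add: rs_def)
qed

lemma Seg0:
  assumes i: "i < 2" and wfA: "wf_pa A" and wfB: "wf_pa B"
  shows "Seg (UNI A B) 0 (enc i q) = Seg (sel A B i) (pa_init (sel A B i)) q"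
proof (intro set_eqI iffI)
  fix w assume "w \<in> Seg (UNI A B) 0 (enc i q)"
  then obtain rs where rs: "w = map tlbl rs" "path (UNI A B) 0 rs (enc i q)"
    "rs \<noteq> [] \<and> (\<forall>t\<in>set (butlast rs). ttgt t \<notin> pa_final (UNI A B)) \<and> rho (pa_dim (UNI A B)) rs \<in> pa_constr (UNI A B)"
    unfolding Seg_def by blast
  then obtain t ts where tts: "rs = t # ts" by (cases rs) auto
  then have "t \<in> uTrans A B" "tsrc t = 0" "path (UNI A B) (ttgt t) ts (enc i q)" using rs(2) by auto
  then obtain j t' where t': "j < 2" "t' \<in> pa_trans (sel A B j)" "tsrc t' = pa_init (sel A B j)"
    "t = startT (pa_dim A) (pa_dim B) j t'"
    using uTrans_from_0 by blast
  then have pts: "path (UNI A B) (enc j (ttgt t')) ts (enc i q)" using \<open>path (UNI A B) (ttgt t) ts (enc i q)\<close> by simp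
  obtain rs'' q' where r: "enc i q = enc j q'" "ts = map (liftT (pa_dim A) (pa_dim B) j) rs''"
    "path (sel A B j) (ttgt t') rs'' q'"
    using unlift[OF t'(1) pts] by blast
  have "j = i" "q' = q" using r(1) i t'(1) by auto
  define rs' where "rs' = t' # rs''"
  have prs': "path (sel A B i) (pa_init (sel A B i)) rs' q" using t' r(3) \<open>j = i\<close> \<open>q' = q\<close> by (simp add: rs'_def)
  have "rs' \<noteq> [] \<and> (\<forall>t\<in>set (butlast rs'). ttgt t \<notin> pa_final (sel A B i)) \<and>
            rho (pa_dim (sel A B i)) rs' \<in> pa_constr (sel A B i)"
    using seg_transfer[OF i wfA wfB prs', of rs] rs(3) r(2) t'(4) tts \<open>j = i\<close> by (simp add: rs'_def)
  then show "w \<in> Seg (sel A B i) (pa_init (sel A B i)) q" unfolding Seg_def using prs' rs(1) tts r(2) t'(4) \<open>j = i\<close>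
    by (intro CollectI exI[of _ rs']) (simp add: rs'_def)
next
  fix w assume "w \<in> Seg (sel A B i) (pa_init (sel A B i)) q"
  then obtain rs' where rs': "w = map tlbl rs'" "path (sel A B i) (pa_init (sel A B i)) rs' q"
    "rs' \<noteq> [] \<and> (\<forall>t\<in>set (butlast rs'). ttgt t \<notin> pa_final (sel A B i)) \<and>
            rho (pa_dim (sel A B i)) rs' \<in> pa_constr (sel A B i)"
    unfolding Seg_def by blast
  then obtain t' rs'' where tts: "rs' = t' # rs''" by (cases rs') auto
  have t': "t' \<in> pa_trans (sel A B i)" "tsrc t' = pa_init (sel A B i)" "path (sel A B i) (ttgt t') rs'' q"
    using rs'(2) tts by auto
  define rs where "rs = startT (pa_dim A) (pa_dim B) i t' # map (liftT (pa_dim A) (pa_dim B) i) rs''"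
  have "path (UNI A B) 0 rs (enc i q)" unfolding rs_def using startT_in[OF i t'(1,2)] lift[OF i t'(3)] by simp
  moreover have "rs \<noteq> [] \<and> (\<forall>t\<in>set (butlast rs). ttgt t \<notin> pa_final (UNI A B)) \<and> rho (pa_dim (UNI A B)) rs \<in> pa_constr (UNI A B)"
    using seg_transfer[OF i wfA wfB rs'(2), of rs] rs'(3) tts by (simp add: rs_def)
  ultimately show "w \<in> Seg (UNI A B) 0 (enc i q)" unfolding Seg_def using rs'(1) tts
    by (intro CollectI exI[of _ rs]) (simp add: rs_def)
qed

lemma Seg_path: "w \<in> Seg A p q \<Longrightarrow> \<exists>rs. path A p rs q"
  unfolding Seg_def by blast

lemma UNI_lang:
  assumes wfA: "wf_pa A" and wfB: "wf_pa B"
  shows "spba_lang (UNI A B) = spba_lang A \<union> spba_lang B"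
proof -
  have main: "\<alpha> \<in> spba_lang (UNI A B) \<longleftrightarrow> (\<exists>i<2. \<alpha> \<in> spba_lang (sel A B i))" for \<alpha>
  proof
    assume "\<alpha> \<in> spba_lang (UNI A B)"
    then obtain fs ws where a0: "fs 0 = pa_init (UNI A B)" and a: "\<forall>n. fs (Suc n) \<in> pa_final (UNI A B)"
      "\<forall>n. ws n \<in> Seg (UNI A B) (fs n) (fs (Suc n))" "is_flat ws \<alpha>"
      unfolding L1 by blast
    have a1: "fs 0 = 0" using a0 by simp
    have "fs 1 \<in> pa_final (UNI A B)" using a(1) by simp
    then obtain i q1 where iq: "i < 2" "fs 1 = enc i q1" unfolding UN_sel(5) by auto
    note a = a1 a
    have ex: "\<exists>q. fs (Suc n) = enc i q" for n
    proof (induction n)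
      case 0 then show ?case using iq by simp
    next
      case (Suc n)
      then obtain q where q: "fs (Suc n) = enc i q" by blast
      obtain rs where "path (UNI A B) (enc i q) rs (fs (Suc (Suc n)))"
        using Seg_path a(3) q by metis
      then show ?case using unlift[OF iq(1)] by blast
    qed
    define g where "g n = (SOME q. fs (Suc n) = enc i q)" for n
    have g: "fs (Suc n) = enc i (g n)" for n unfolding g_def using someI_ex[OF ex] .
    define fs' where "fs' = case_nat (pa_init (sel A B i)) g"
    have "\<alpha> \<in> spba_lang (sel A B i)" unfolding L1
    proof (intro exI conjI allI)
      show "fs' 0 = pa_init (sel A B i)" by (simp add: fs'_def)
      fix n
      show "fs' (Suc n) \<in> pa_final (sel A B i)"
        using a(2) g[of n] final_UN[OF iq(1), of "g n" A B] by (simp add: fs'_def) metis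
      show "ws n \<in> Seg (sel A B i) (fs' n) (fs' (Suc n))"
      proof (cases n)
        case 0 then show ?thesis using a(3) a(1) g[of 0] Seg0[OF iq(1) wfA wfB] by (simp add: fs'_def) metis
      next
        case (Suc m) then show ?thesis using a(3) g[of m] g[of n] SegE[OF iq(1) wfA wfB] by (simp add: fs'_def) metis
      qed
    qed (rule a(4))
    then show "\<exists>i<2. \<alpha> \<in> spba_lang (sel A B i)" using iq(1) by blast
  next
    assume "\<exists>i<2. \<alpha> \<in> spba_lang (sel A B i)"
    then obtain i where i: "i < 2" "\<alpha> \<in> spba_lang (sel A B i)" by blast
    then obtain fs' ws where a: "fs' 0 = pa_init (sel A B i)" "\<forall>n. fs' (Suc n) \<in> pa_final (sel A B i)"
      "\<forall>n. ws n \<in> Seg (sel A B i) (fs' n) (fs' (Suc n))" "is_flat ws \<alpha>"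
      unfolding L1 by blast
    define fs where "fs = case_nat 0 (\<lambda>n. enc i (fs' (Suc n)))"
    show "\<alpha> \<in> spba_lang (UNI A B)" unfolding L1
    proof (intro exI conjI allI)
      show "fs 0 = pa_init (UNI A B)" by (simp add: fs_def)
      fix n
      show "fs (Suc n) \<in> pa_final (UNI A B)"
        using a(2) final_UN[OF i(1), of _ A B] by (simp add: fs_def)
      show "ws n \<in> Seg (UNI A B) (fs n) (fs (Suc n))"
      proof (cases n)
        case 0 then show ?thesis using a(3) a(1) Seg0[OF i(1) wfA wfB] by (simp add: fs_def) metis
      next
        case (Suc m) then show ?thesis using a(3) SegE[OF i(1) wfA wfB] by (simp add: fs_def)
      qed
    qed (rule a(4))
  qed
  have "(\<exists>i<2. \<alpha> \<in> spba_lang (sel A B i)) \<longleftrightarrow> \<alpha> \<in> spba_lang A \<or> \<alpha> \<in> spba_lang B" for \<alpha>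
  proof
    assume "\<exists>i<2. \<alpha> \<in> spba_lang (sel A B i)"
    then obtain i where "i < 2" "\<alpha> \<in> spba_lang (sel A B i)" by blast
    then show "\<alpha> \<in> spba_lang A \<or> \<alpha> \<in> spba_lang B" by (cases "i = 0") (auto simp: sel_def)
  next
    assume "\<alpha> \<in> spba_lang A \<or> \<alpha> \<in> spba_lang B"
    then show "\<exists>i<2. \<alpha> \<in> spba_lang (sel A B i)"
    proof
      assume "\<alpha> \<in> spba_lang A" then show ?thesis by (intro exI[of _ 0]) (simp add: sel_def)
    next
      assume "\<alpha> \<in> spba_lang B" then show ?thesis by (intro exI[of _ 1]) (simp add: sel_def)
    qed
  qed
  then show ?thesis using main by blast
qed



lemma UNI_wf:
  assumes wfA: "wf_pa A" and wfB: "wf_pa B"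
  shows "wf_pa (UNI A B)"
proof -
  have wfi: "wf_pa (sel A B i)" for i using sel_wf[OF wfA wfB] .
  have "finite (UNstates A B)" unfolding UNstates_def using wfi unfolding wf_pa_def by auto
  moreover have "pa_final (UNI A B) \<subseteq> pa_states (UNI A B)"
    unfolding UN_sel using wfi unfolding wf_pa_def by blast
  moreover have "finite (uTrans A B)" unfolding uTrans_def using wfi unfolding wf_pa_def by auto
  moreover have "\<forall>(p, a, v, q) \<in> pa_trans (UNI A B). p \<in> pa_states (UNI A B) \<and> q \<in> pa_states (UNI A B) \<and>
      length v = pa_dim (UNI A B)"
  proof
    fix t assume "t \<in> pa_trans (UNI A B)"
    then have "t \<in> uTrans A B" by simp
    then have "tsrc t \<in> pa_states (UNI A B) \<and> ttgt t \<in> pa_states (UNI A B) \<and> length (tvec t) = pa_dim (UNI A B)"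
    proof (cases rule: uTrans_cases)
      case (L i t')
      have h: "tsrc t' \<in> pa_states (sel A B i)" "ttgt t' \<in> pa_states (sel A B i)"
        "length (tvec t') = pa_dim (sel A B i)"
        using wf_src[OF wfi, of "tsrc t'" "tlbl t'" "tvec t'" "ttgt t'"] wf_tgt[OF wfi, of "tsrc t'" "tlbl t'" "tvec t'" "ttgt t'"]
          wf_len[OF wfi, of "tsrc t'" "tlbl t'" "tvec t'" "ttgt t'"] L(2) trans_split[of t'] by auto
      then show ?thesis using L states_UN[OF L(1), of _ A B] by (cases "i = 0") (auto simp: pad_def sel_def)
    next
      case (S i t')
      have h: "ttgt t' \<in> pa_states (sel A B i)" "length (tvec t') = pa_dim (sel A B i)"
        using wf_tgt[OF wfi, of "tsrc t'" "tlbl t'" "tvec t'" "ttgt t'"]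
          wf_len[OF wfi, of "tsrc t'" "tlbl t'" "tvec t'" "ttgt t'"] S(2) trans_split[of t'] by auto
      then show ?thesis using S states_UN[OF S(1), of _ A B] by (cases "i = 0") (auto simp: pad_def sel_def)
    qed
    then show "case t of (p, a, v, q) \<Rightarrow> p \<in> pa_states (UNI A B) \<and> q \<in> pa_states (UNI A B) \<and> length v = pa_dim (UNI A B)"
      by (cases t) simp
  qed
  moreover have "semilinear (pa_dim (UNI A B)) (pa_constr (UNI A B))"
  proof -
    have sA: "semilinear (pa_dim A) (pa_constr A)" and sB: "semilinear (pa_dim B) (pa_constr B)"
      using wfA wfB unfolding wf_pa_def by blast+
    have p1: "semilinear 2 pos1" unfolding pos1_def by (rule semilinear_pos1)
    have p2: "semilinear 2 pos2" unfolding pos2_def by (rule semilinear_pos2)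
    have s1: "semilinear (pa_dim A + (pa_dim B + 2)) (vprod (pa_constr A) (vprod {replicate (pa_dim B) 0} pos1))"
      using semilinear_prod[OF sA semilinear_prod[OF semilinear_single[of "replicate (pa_dim B) 0"] p1]] by simp
    have s2: "semilinear (pa_dim A + (pa_dim B + 2)) (vprod {replicate (pa_dim A) 0} (vprod (pa_constr B) pos2))"
      using semilinear_prod[OF semilinear_single[of "replicate (pa_dim A) 0"] semilinear_prod[OF sB p2]] by simp
    show ?thesis using semilinear_Un[OF s1 s2] by simp
  qed
  ultimately show ?thesis unfolding wf_pa_def by (simp add: UNstates_def)
qed

lemma edge_E: "(x, y) \<in> pa_edges A \<Longrightarrow> \<exists>t\<in>pa_trans A. tsrc t = x \<and> ttgt t = y"
  unfolding pa_edges_def by force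

lemma trans_edge: "t \<in> pa_trans A \<Longrightarrow> (tsrc t, ttgt t) \<in> pa_edges A"
  unfolding pa_edges_def using trans_split[of t] by auto metis

lemma scc_eq:
  assumes "p \<in> scc_of A q"
  shows "scc_of A p = scc_of A q"
  using assms unfolding scc_of_def by (auto intro: rtrancl_trans)

lemma E_from_enc:
  assumes i: "i < 2" and e: "(enc i p, y) \<in> pa_edges (UNI A B)"
  shows "\<exists>q. y = enc i q \<and> (p, q) \<in> pa_edges (sel A B i)"
proof -
  obtain t where t: "t \<in> uTrans A B" "tsrc t = enc i p" "ttgt t = y" using edge_E[OF e] by auto
  then obtain t' where "t' \<in> pa_trans (sel A B i)" "tsrc t' = p" "t = liftT (pa_dim A) (pa_dim B) i t'"
    using uTrans_from_enc i by blast
  then show ?thesis using t trans_edge[of t' "sel A B i"] by auto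
qed

lemma E_lift:
  assumes i: "i < 2" and e: "(p, q) \<in> pa_edges (sel A B i)"
  shows "(enc i p, enc i q) \<in> pa_edges (UNI A B)"
proof -
  obtain t where t: "t \<in> pa_trans (sel A B i)" "tsrc t = p" "ttgt t = q" using edge_E[OF e] by auto
  then have "liftT (pa_dim A) (pa_dim B) i t \<in> pa_trans (UNI A B)" using liftT_in[OF i] by simp
  from trans_edge[OF this] show ?thesis using t by simp
qed

lemma E_not0: "(x, 0) \<notin> pa_edges (UNI A B)"
proof
  assume "(x, 0) \<in> pa_edges (UNI A B)"
  then obtain t where t: "t \<in> uTrans A B" "ttgt t = 0" using edge_E by fastforce
  from t(1) show False
  proof (cases rule: uTrans_cases)
    case (L i t') then show ?thesis using t(2) by simp
  next
    case (S i t') then show ?thesis using t(2) by simp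
  qed
qed

lemma rt1:
  assumes i: "i < 2"
  shows "(enc i p, y) \<in> (pa_edges (UNI A B))\<^sup>* \<Longrightarrow> \<exists>q. y = enc i q \<and> (p, q) \<in> (pa_edges (sel A B i))\<^sup>*"
proof (induction rule: rtrancl_induct)
  case base then show ?case by blast
next
  case (step y z)
  then obtain q where q: "y = enc i q" "(p, q) \<in> (pa_edges (sel A B i))\<^sup>*" by blast
  then obtain q' where q': "z = enc i q'" "(q, q') \<in> pa_edges (sel A B i)" using E_from_enc[OF i] step(2) by blast
  have "(p, q') \<in> (pa_edges (sel A B i))\<^sup>*" using q(2) q'(2) by (rule rtrancl_into_rtrancl)
  then show ?case using q'(1) by blast
qed

lemma rt2:
  assumes i: "i < 2"
  shows "(p, q) \<in> (pa_edges (sel A B i))\<^sup>* \<Longrightarrow> (enc i p, enc i q) \<in> (pa_edges (UNI A B))\<^sup>*"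
proof (induction rule: rtrancl_induct)
  case base then show ?case by simp
next
  case (step y z)
  then show ?case using E_lift[OF i step(2)] by (meson rtrancl_into_rtrancl)
qed

lemma rt0: "(x, 0) \<in> (pa_edges (UNI A B))\<^sup>* \<Longrightarrow> x = 0"
  by (erule rtranclE) (use E_not0 in auto)

lemma scc_enc:
  assumes i: "i < 2"
  shows "scc_of (UNI A B) (enc i q) = enc i ` scc_of (sel A B i) q"
proof (intro set_eqI iffI)
  fix x assume "x \<in> scc_of (UNI A B) (enc i q)"
  then have x: "x \<in> pa_states (UNI A B)" "(enc i q, x) \<in> (pa_edges (UNI A B))\<^sup>*" "(x, enc i q) \<in> (pa_edges (UNI A B))\<^sup>*"
    unfolding scc_of_def by auto
  obtain p where p: "x = enc i p" "(q, p) \<in> (pa_edges (sel A B i))\<^sup>*" using rt1[OF i x(2)] by blast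
  obtain q' where "enc i q = enc i q'" "(p, q') \<in> (pa_edges (sel A B i))\<^sup>*" using rt1[OF i] x(3) p(1) by blast
  then have "(p, q) \<in> (pa_edges (sel A B i))\<^sup>*" using i by simp
  moreover have "p \<in> pa_states (sel A B i)" using x(1) p(1) states_UN[OF i, of p A B] by simp
  ultimately show "x \<in> enc i ` scc_of (sel A B i) q" using p unfolding scc_of_def by blast
next
  fix x assume "x \<in> enc i ` scc_of (sel A B i) q"
  then obtain p where p: "x = enc i p" "p \<in> pa_states (sel A B i)" "(q, p) \<in> (pa_edges (sel A B i))\<^sup>*"
    "(p, q) \<in> (pa_edges (sel A B i))\<^sup>*" unfolding scc_of_def by blast
  then show "x \<in> scc_of (UNI A B) (enc i q)" unfolding scc_of_def
    using rt2[OF i] states_UN[OF i, of p A B] by blast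
qed

lemma scc_0: "scc_of (UNI A B) 0 = {0}"
  unfolding scc_of_def using rt0 by auto

lemma UNI_leaves:
  assumes wfA: "wf_pa A" and wfB: "wf_pa B"
    and lA: "final_only_in_leaves A" and lB: "final_only_in_leaves B"
  shows "final_only_in_leaves (UNI A B)"
proof -
  have wfi: "wf_pa (sel A B i)" for i using sel_wf[OF wfA wfB] .
  have li: "final_only_in_leaves (sel A B i)" for i using lA lB by (simp add: sel_def)
  have part1: "\<exists>S. is_leaf_scc (UNI A B) S \<and> x \<in> S" if x: "x \<in> pa_final (UNI A B)" for x
  proof -
    obtain i f where i: "i < 2" "x = enc i f" "f \<in> pa_final (sel A B i)"
      using x unfolding UN_sel by auto
    obtain Si where Si: "is_leaf_scc (sel A B i) Si" "f \<in> Si"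
      using li[of i] i(3) unfolding final_only_in_leaves_def by blast
    obtain q0 where "Si = scc_of (sel A B i) q0" using Si(1) unfolding is_leaf_scc_def sccs_def by blast
    then have Sif: "Si = scc_of (sel A B i) f" using scc_eq Si(2) by metis
    have fS: "f \<in> pa_states (sel A B i)" using Si(2) Sif unfolding scc_of_def by blast
    define S where "S = enc i ` Si"
    have Sx: "S = scc_of (UNI A B) x" unfolding S_def Sif i(2) scc_enc[OF i(1)] ..
    have "is_leaf_scc (UNI A B) S" unfolding is_leaf_scc_def
    proof
      show "S \<in> sccs (UNI A B)" unfolding sccs_def Sx using fS states_UN[OF i(1)] i(2) by blast
      show "\<not> (\<exists>u\<in>S. \<exists>v. (u, v) \<in> pa_edges (UNI A B) \<and> v \<notin> S)"
      proof
        assume "\<exists>u\<in>S. \<exists>v. (u, v) \<in> pa_edges (UNI A B) \<and> v \<notin> S"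
        then obtain u v where uv: "u \<in> S" "(u, v) \<in> pa_edges (UNI A B)" "v \<notin> S" by blast
        obtain u' where u': "u = enc i u'" "u' \<in> Si" using uv(1) unfolding S_def by blast
        obtain v' where v': "v = enc i v'" "(u', v') \<in> pa_edges (sel A B i)"
          using E_from_enc[OF i(1)] uv(2) u'(1) by blast
        have "v' \<in> Si" using Si(1) u'(2) v'(2) unfolding is_leaf_scc_def by blast
        then show False using uv(3) v'(1) unfolding S_def by blast
      qed
    qed
    moreover have "x \<in> S" unfolding S_def using i(2) Si(2) by blast
    ultimately show ?thesis by blast
  qed
  have part2: "card (S \<inter> pa_final (UNI A B)) \<le> 1" if S: "is_leaf_scc (UNI A B) S" for S
  proof -
    obtain x where x: "x \<in> pa_states (UNI A B)" "S = scc_of (UNI A B) x"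
      using S unfolding is_leaf_scc_def sccs_def by blast
    show ?thesis
    proof (cases "x = 0")
      case True
      then have "S = {0}" using x scc_0 by simp
      moreover have "0 \<notin> pa_final (UNI A B)" unfolding UN_sel by auto
      ultimately show ?thesis by simp
    next
      case False
      then obtain i q where i: "i < 2" "x = enc i q" "q \<in> pa_states (sel A B i)"
        using x(1) unfolding UN_sel by auto
      have SS: "S = enc i ` scc_of (sel A B i) q" using x(2) i(2) scc_enc[OF i(1)] by simp
      have leaf: "is_leaf_scc (sel A B i) (scc_of (sel A B i) q)" unfolding is_leaf_scc_def
      proof
        show "scc_of (sel A B i) q \<in> sccs (sel A B i)" unfolding sccs_def using i(3) by blast
        show "\<not> (\<exists>u\<in>scc_of (sel A B i) q. \<exists>v. (u, v) \<in> pa_edges (sel A B i) \<and> v \<notin> scc_of (sel A B i) q)"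
        proof
          assume "\<exists>u\<in>scc_of (sel A B i) q. \<exists>v. (u, v) \<in> pa_edges (sel A B i) \<and> v \<notin> scc_of (sel A B i) q"
          then obtain u v where uv: "u \<in> scc_of (sel A B i) q" "(u, v) \<in> pa_edges (sel A B i)" "v \<notin> scc_of (sel A B i) q"
            by blast
          have "enc i u \<in> S" using uv(1) SS by blast
          moreover have "(enc i u, enc i v) \<in> pa_edges (UNI A B)" using E_lift[OF i(1) uv(2)] .
          ultimately have "enc i v \<in> S" using S unfolding is_leaf_scc_def by blast
          then have "v \<in> scc_of (sel A B i) q" using SS i(1) by auto
          then show False using uv(3) by blast
        qed
      qed
      have c1: "card (scc_of (sel A B i) q \<inter> pa_final (sel A B i)) \<le> 1"
        using li[of i] leaf unfolding final_only_in_leaves_def by blast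
      have fin: "finite (scc_of (sel A B i) q \<inter> pa_final (sel A B i))"
        using leaf_finite[OF wfi leaf] by blast
      have "S \<inter> pa_final (UNI A B) \<subseteq> enc i ` (scc_of (sel A B i) q \<inter> pa_final (sel A B i))"
      proof
        fix y assume "y \<in> S \<inter> pa_final (UNI A B)"
        then obtain p where p: "y = enc i p" "p \<in> scc_of (sel A B i) q" "enc i p \<in> pa_final (UNI A B)"
          using SS by blast
        then have "p \<in> pa_final (sel A B i)" using final_UN[OF i(1), of p A B] by simp
        then show "y \<in> enc i ` (scc_of (sel A B i) q \<inter> pa_final (sel A B i))" using p by blast
      qed
      then have "card (S \<inter> pa_final (UNI A B)) \<le> card (enc i ` (scc_of (sel A B i) q \<inter> pa_final (sel A B i)))"
        using fin by (intro card_mono) auto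
      also have "\<dots> \<le> card (scc_of (sel A B i) q \<inter> pa_final (sel A B i))" using fin by (rule card_image_le)
      finally show ?thesis using c1 by simp
    qed
  qed
  show ?thesis unfolding final_only_in_leaves_def using part1 part2 by blast
qed



definition emptyPA :: "'a pa" where
  "emptyPA = \<lparr>pa_dim = 0, pa_states = {0}, pa_init = 0, pa_trans = {}, pa_final = {}, pa_constr = {}\<rparr>"

lemma emptyPA_wf: "wf_pa emptyPA"
  unfolding wf_pa_def emptyPA_def using semilinear_empty by auto

lemma emptyPA_lang: "spba_lang emptyPA = {}"
  unfolding spba_lang_def is_orun_def emptyPA_def by auto

lemma emptyPA_leaves: "final_only_in_leaves emptyPA"
  unfolding final_only_in_leaves_def emptyPA_def by simp

lemma dir1:
  "(\<forall>(U, V) \<in> set UVs. parikh_recognizable U \<and> parikh_recognizable V) \<Longrightarrow>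
   \<exists>A :: ('a::finite) pa. wf_pa A \<and> spba_lang A = (\<Union>(U, V) \<in> set UVs. conc_omega U (omega_pow V)) \<and>
      final_only_in_leaves A"
proof (induction UVs)
  case Nil
  then show ?case using emptyPA_wf emptyPA_lang emptyPA_leaves by auto
next
  case (Cons UV UVs)
  obtain U V where UV: "UV = (U, V)" by (cases UV)
  have "parikh_recognizable U" "parikh_recognizable V" using Cons.prems UV by auto
  then obtain P R :: "'a pa" where PR: "wf_pa P" "pa_lang P = U" "wf_pa R" "pa_lang R = V"
    unfolding parikh_recognizable_def by blast
  obtain A :: "'a pa" where A: "wf_pa A" "spba_lang A = (\<Union>(U, V) \<in> set UVs. conc_omega U (omega_pow V))"
    "final_only_in_leaves A"
    using Cons.IH Cons.prems by auto
  have w1: "wf_pa (cPA P R)" using cPA_wf[OF PR(1,3)] .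
  have "wf_pa (UNI (cPA P R) A)" using UNI_wf[OF w1 A(1)] .
  moreover have "spba_lang (UNI (cPA P R) A) = (\<Union>(U, V) \<in> set (UV # UVs). conc_omega U (omega_pow V))"
    using UNI_lang[OF w1 A(1)] cPA_lang[OF PR(1,3)] A(2) PR(2,4) UV by simp
  moreover have "final_only_in_leaves (UNI (cPA P R) A)"
    using UNI_leaves[OF w1 A(1) cPA_leaves[OF PR(1,3)] A(3)] .
  ultimately show ?case by blast
qed

theorem theorem3:
  fixes L :: "('a :: finite) word set"
  shows "(\<exists>UVs :: ('a list set \<times> 'a list set) list.
            (\<forall>(U, V) \<in> set UVs. parikh_recognizable U \<and> parikh_recognizable V) \<and>
            L = (\<Union>(U, V) \<in> set UVs. conc_omega U (omega_pow V)))
     \<longleftrightarrow>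
         (\<exists>A :: 'a pa. wf_pa A \<and> spba_lang A = L \<and> final_only_in_leaves A)"
proof
  assume "\<exists>UVs :: ('a list set \<times> 'a list set) list.
            (\<forall>(U, V) \<in> set UVs. parikh_recognizable U \<and> parikh_recognizable V) \<and>
            L = (\<Union>(U, V) \<in> set UVs. conc_omega U (omega_pow V))"
  then obtain UVs :: "('a list set \<times> 'a list set) list" where
    "\<forall>(U, V) \<in> set UVs. parikh_recognizable U \<and> parikh_recognizable V"
    "L = (\<Union>(U, V) \<in> set UVs. conc_omega U (omega_pow V))" by blast
  then show "\<exists>A :: 'a pa. wf_pa A \<and> spba_lang A = L \<and> final_only_in_leaves A"
    using dir1 by metis
next
  assume "\<exists>A :: 'a pa. wf_pa A \<and> spba_lang A = L \<and> final_only_in_leaves A"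
  then obtain A :: "'a pa" where "wf_pa A" "spba_lang A = L" "final_only_in_leaves A" by blast
  then show "\<exists>UVs :: ('a list set \<times> 'a list set) list.
            (\<forall>(U, V) \<in> set UVs. parikh_recognizable U \<and> parikh_recognizable V) \<and>
            L = (\<Union>(U, V) \<in> set UVs. conc_omega U (omega_pow V))"
    using dir2_list by metis
qed


end
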